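(* Let $Z$ be a critical Galton–Watson process of index $1+\alpha$ as in the context, with $Z_0=1$, and let $S_0(j):=\sum_{l=0}^{j-1}Z_l$. Then, as $j\uparrow\infty$, $$a_j:=\mathbf{E}\{S_0(j);\,Z_j=0\}\sim\frac{\alpha j}{2\alpha+1}.$$
   Context: $Z=\{Z_n\}$ is a Galton–Watson process whose offspring generating function satisfies $\mathbf{E}\xi=1$ and $f(s)=\mathbf{E}s^{\xi}=s+(1-s)^{1+\alpha}L(1-s)$, $0\leq s\leq1$, with $\alpha\in(0,1]$ and $L$ slowly varying at $0$. $\mathbf{E}\{Y;A\}$ denotes $\mathbf{E}[Y\mathbf{1}_A]$. *)

theory Defs
  imports "HOL-Probability.Probability" "HOL-Library.Landau_Symbols"
begin

definition slowly_varying_at_0 :: "(real \<Rightarrow> real) \<Rightarrow> bool" where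
  "slowly_varying_at_0 L \<longleftrightarrow>
     (\<forall>\<^sub>F x in at_right 0. L x > 0) \<and>
     (\<forall>c>0. ((\<lambda>x. L (c * x) / L x) \<longlongrightarrow> 1) (at_right 0))"

definition GW_process ::
  "'a measure \<Rightarrow> nat pmf \<Rightarrow> (nat \<Rightarrow> nat \<Rightarrow> 'a \<Rightarrow> nat) \<Rightarrow> (nat \<Rightarrow> 'a \<Rightarrow> nat) \<Rightarrow> bool" where
  "GW_process M p xi Z \<longleftrightarrow>
     prob_space M \<and>
     prob_space.indep_vars M (\<lambda>_. count_space UNIV) (\<lambda>(n, i). xi n i) UNIV \<and>
     (\<forall>n i. distr M (count_space UNIV) (xi n i) = measure_pmf p) \<and>
     (\<forall>\<omega>\<in>space M. Z 0 \<omega> = 1 \<and> (\<forall>n. Z (Suc n) \<omega> = (\<Sum>i<Z n \<omega>. xi n i \<omega>)))"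

end

theory Submission
  imports Defs
begin

definition pgf :: "nat pmf \<Rightarrow> real \<Rightarrow> real" where
  "pgf p s = (\<Sum>k. pmf p k * s ^ k)"

definition genF :: "'a measure \<Rightarrow> (nat \<Rightarrow> nat \<Rightarrow> 'a \<Rightarrow> nat) \<Rightarrow> nat \<times> nat \<Rightarrow> 'a set set" where
  "genF M xi = (\<lambda>(k,i). {xi k i -` A \<inter> space M | A. A \<in> sets (count_space (UNIV::nat set))})"

definition Mn :: "'a measure \<Rightarrow> (nat \<Rightarrow> nat \<Rightarrow> 'a \<Rightarrow> nat) \<Rightarrow> nat \<Rightarrow> 'a measure" where
  "Mn M xi n = sigma (space M) (\<Union>ki\<in>{ki. fst ki < n}. genF M xi ki)"

lemma GW_prob: "GW_process M p xi Z \<Longrightarrow> prob_space M"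
  by (simp add: GW_process_def)

lemma GW_xi_meas:
  assumes "GW_process M p xi Z"
  shows "xi k i \<in> measurable M (count_space UNIV)"
proof -
  interpret prob_space M using assms by (simp add: GW_process_def)
  have "indep_vars (\<lambda>_. count_space UNIV) (\<lambda>(n, i). xi n i) UNIV"
    using assms by (simp add: GW_process_def)
  then show ?thesis unfolding indep_vars_def2 by (auto dest!: bspec[where x="(k,i)"])
qed

lemma genF_sub: "genF M xi ki \<subseteq> Pow (space M)"
  unfolding genF_def by (auto split: prod.splits)

lemma space_Mn[simp]: "space (Mn M xi n) = space M"
  unfolding Mn_def by (rule space_measure_of) (use genF_sub in blast)

lemma sets_Mn: "sets (Mn M xi n) = sigma_sets (space M) (\<Union>ki\<in>{ki. fst ki < n}. genF M xi ki)"
  unfolding Mn_def by (rule sets_measure_of) (use genF_sub in blast)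

lemma sets_Mn_sub:
  assumes "GW_process M p xi Z"
  shows "sets (Mn M xi n) \<subseteq> sets M"
  unfolding sets_Mn
proof (rule sets.sigma_sets_subset)
  show "(\<Union>ki\<in>{ki. fst ki < n}. genF M xi ki) \<subseteq> sets M"
    using GW_xi_meas[OF assms] unfolding genF_def by (auto split: prod.splits)
qed

lemma meas_Mn_M:
  assumes "GW_process M p xi Z" "f \<in> measurable (Mn M xi n) N"
  shows "f \<in> measurable M N"
  using assms(2) sets_Mn_sub[OF assms(1), of n] unfolding measurable_def by auto

lemma xi_meas_Mn:
  assumes "GW_process M p xi Z" "k < n"
  shows "xi k i \<in> measurable (Mn M xi n) (count_space UNIV)"
proof -
  have "xi k i \<in> space M \<rightarrow> UNIV" by simp
  moreover have "xi k i -` A \<inter> space M \<in> sets (Mn M xi n)" for A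
    unfolding sets_Mn using assms(2)
    by (intro sigma_sets.Basic UN_I[of "(k,i)"]) (auto simp: genF_def)
  ultimately show ?thesis unfolding measurable_def by auto
qed

lemma Z_meas_Mn:
  assumes "GW_process M p xi Z" "m \<le> n"
  shows "Z m \<in> measurable (Mn M xi n) (count_space UNIV)"
  using assms(2)
proof (induction m)
  case 0
  have "Z 0 \<in> measurable (Mn M xi n) (count_space UNIV) \<longleftrightarrow> (\<lambda>_. 1::nat) \<in> measurable (Mn M xi n) (count_space UNIV)"
    using assms(1) by (intro measurable_cong) (simp add: GW_process_def)
  then show ?case by simp
next
  case (Suc m)
  have "Z (Suc m) \<in> measurable (Mn M xi n) (count_space UNIV) \<longleftrightarrow>
     (\<lambda>w. (\<lambda>N w. \<Sum>i<N. xi m i w) (Z m w) w) \<in> measurable (Mn M xi n) (count_space UNIV)"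
    using assms(1) by (intro measurable_cong) (simp add: GW_process_def)
  moreover have "(\<lambda>w. (\<lambda>N w. \<Sum>i<N. xi m i w) (Z m w) w) \<in> measurable (Mn M xi n) (count_space UNIV)"
  proof (rule measurable_compose_countable[where f="\<lambda>N w. \<Sum>i<N. xi m i w" and g="Z m"])
    fix N :: nat
    have "\<And>i. xi m i \<in> measurable (Mn M xi n) (count_space UNIV)"
      using xi_meas_Mn[OF assms(1)] Suc by simp
    then show "(\<lambda>w. \<Sum>i<N. xi m i w) \<in> measurable (Mn M xi n) (count_space UNIV)"
      by measurable
  next
    show "Z m \<in> measurable (Mn M xi n) (count_space UNIV)" using Suc.IH Suc.prems by simp
  qed
  ultimately show ?case by simp
qed

lemma Z_meas:
  assumes "GW_process M p xi Z"
  shows "Z m \<in> measurable M (count_space UNIV)"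
  using meas_Mn_M[OF assms Z_meas_Mn[OF assms order_refl]] .

lemma pmf_sums1: "(pmf (p::nat pmf)) sums 1"
proof -
  have "(\<Sum>k. ennreal (pmf p k)) = (\<integral>\<^sup>+k. ennreal (pmf p k) \<partial>count_space UNIV)"
    by (rule nn_integral_count_space_nat[symmetric])
  also have "\<dots> = emeasure (measure_pmf p) UNIV"
    by (rule nn_integral_pmf)
  also have "\<dots> = 1"
    using measure_pmf.emeasure_space_1[of p] by simp
  finally have e: "(\<Sum>k. ennreal (pmf p k)) = 1" .
  have sm: "summable (pmf p)"
    by (rule summable_suminf_not_top) (simp_all add: e)
  have "ennreal (\<Sum>k. pmf p k) = 1"
    using e suminf_ennreal2[of "pmf p", OF pmf_nonneg sm] by simp
  then have "(\<Sum>k. pmf p k) = 1"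
    using ennreal_1 ennreal_inj pmf_nonneg suminf_nonneg[OF sm] zero_le_one by metis
  then show ?thesis using summable_sums[OF sm] by simp
qed

lemma pgf_summable:
  assumes "0 \<le> s" "s \<le> 1"
  shows "summable (\<lambda>k. pmf p k * s ^ k)"
proof (rule summable_comparison_test[OF _ sums_summable[OF pmf_sums1[of p]]])
  show "\<exists>N. \<forall>n\<ge>N. norm (pmf p n * s ^ n) \<le> pmf p n"
    using assms by (auto intro!: exI[of _ 0] mult_left_le simp: power_le_one)
qed

lemma nn_integral_xi_pow:
  assumes GW: "GW_process M p xi Z" and s: "0 \<le> s" "s \<le> 1"
  shows "(\<integral>\<^sup>+\<omega>. ennreal (s ^ xi n i \<omega>) \<partial>M) = ennreal (pgf p s)"
proof -
  have d: "distr M (count_space UNIV) (xi n i) = measure_pmf p"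
    using GW by (simp add: GW_process_def)
  have "(\<integral>\<^sup>+\<omega>. ennreal (s ^ xi n i \<omega>) \<partial>M) = (\<integral>\<^sup>+k. ennreal (s ^ k) \<partial>distr M (count_space UNIV) (xi n i))"
    by (subst nn_integral_distr) (auto simp: GW_xi_meas[OF GW])
  also have "\<dots> = (\<integral>\<^sup>+k. ennreal (pmf p k) * ennreal (s ^ k) \<partial>count_space UNIV)"
    unfolding d nn_integral_measure_pmf ..
  also have "\<dots> = (\<Sum>k. ennreal (pmf p k * s ^ k))"
    by (subst nn_integral_count_space_nat) (simp add: ennreal_mult' s)
  also have "\<dots> = ennreal (pgf p s)"
    unfolding pgf_def by (rule suminf_ennreal2) (use pgf_summable[OF s] s in auto)
  finally show ?thesis .
qed

lemma core_indep:
  assumes GW: "GW_process M p xi Z"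
    and h: "h \<in> borel_measurable (Mn M xi n)" "\<And>\<omega>. 0 \<le> h \<omega>"
    and s: "0 \<le> s" "s \<le> 1"
  shows "(\<integral>\<^sup>+\<omega>. ennreal (h \<omega> * (\<Prod>i<N. s ^ xi n i \<omega>)) \<partial>M)
       = (\<integral>\<^sup>+\<omega>. ennreal (h \<omega>) \<partial>M) * ennreal (pgf p s ^ N)"
proof -
  interpret prob_space M using GW by (simp add: GW_process_def)
  define X :: "nat option \<Rightarrow> 'a \<Rightarrow> ennreal" where
    "X j = (case j of None \<Rightarrow> (\<lambda>\<omega>. ennreal (h \<omega>)) | Some i \<Rightarrow> (\<lambda>\<omega>. ennreal (s ^ xi n i \<omega>)))" for j
  define I where "I = insert None (Some ` {..<N})"
  define E where "E = genF M xi"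
  define Jm :: "nat option \<Rightarrow> (nat \<times> nat) set" where
    "Jm j = (case j of None \<Rightarrow> {ki. fst ki < n} | Some i \<Rightarrow> {(n,i)})" for j
  have indE: "indep_sets E UNIV"
  proof -
    have "indep_vars (\<lambda>_. count_space UNIV) (\<lambda>(n, i). xi n i) UNIV"
      using GW by (simp add: GW_process_def)
    then have "indep_sets (\<lambda>ki. {(\<lambda>(n, i). xi n i) ki -` A \<inter> space M | A. A \<in> sets (count_space UNIV)}) UNIV"
      unfolding indep_vars_def2 by simp
    then show ?thesis unfolding E_def genF_def
      by (rule iffD1[OF indep_sets_cong, rotated 2]) (auto split: prod.splits)
  qed
  have coll: "indep_sets (\<lambda>j. sigma_sets (space M) (\<Union>ki\<in>Jm j. E ki)) I"
  proof (rule indep_sets_collect_sigma)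
    show "indep_sets E (\<Union>j\<in>I. Jm j)"
      by (rule indep_sets_mono_index[OF _ indE]) simp
    show "Int_stable (E ki)" for ki
    proof -
      obtain k i where ki: "ki = (k,i)" by force
      show ?thesis unfolding E_def genF_def Int_stable_def ki
      proof (clarsimp)
        fix A B
        show "\<exists>C. xi k i -` A \<inter> space M \<inter> (xi k i -` B \<inter> space M) = xi k i -` C \<inter> space M"
          by (rule exI[of _ "A \<inter> B"]) auto
      qed
    qed
    show "disjoint_family_on Jm I"
      unfolding disjoint_family_on_def Jm_def I_def by auto
  qed
  have indX: "indep_vars (\<lambda>_. borel) X I"
    unfolding indep_vars_def2
  proof (intro conjI ballI)
    fix j assume "j \<in> I"
    show "random_variable borel (X j)"
    proof (cases j)
      case None
      have "h \<in> borel_measurable M" using meas_Mn_M[OF GW h(1)] .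
      then have "(\<lambda>\<omega>. ennreal (h \<omega>)) \<in> borel_measurable M" by measurable
      then show ?thesis using None by (simp add: X_def)
    next
      case (Some i)
      have "xi n i \<in> measurable M (count_space UNIV)" by (rule GW_xi_meas[OF GW])
      then have "(\<lambda>\<omega>. ennreal (s ^ xi n i \<omega>)) \<in> borel_measurable M" by measurable
      then show ?thesis using Some by (simp add: X_def)
    qed
  next
    show "indep_sets (\<lambda>j. {X j -` A \<inter> space M |A. A \<in> sets borel}) I"
    proof (rule indep_sets_mono_sets[OF coll])
      fix j assume "j \<in> I"
      show "{X j -` A \<inter> space M |A. A \<in> sets borel} \<subseteq> sigma_sets (space M) (\<Union>ki\<in>Jm j. E ki)"
      proof (cases j)
        case None
        have hm: "(\<lambda>\<omega>. ennreal (h \<omega>)) \<in> borel_measurable (Mn M xi n)" using h(1) by measurable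
        have "(\<lambda>\<omega>. ennreal (h \<omega>)) -` A \<inter> space M \<in> sets (Mn M xi n)" if "A \<in> sets borel" for A
          using measurable_sets[OF hm that] by simp
        then show ?thesis using None unfolding X_def Jm_def E_def by (auto simp: sets_Mn)
      next
        case (Some i)
        have "(\<lambda>\<omega>. ennreal (s ^ xi n i \<omega>)) -` A \<inter> space M \<in> E (n,i)" for A
          unfolding E_def genF_def by (auto intro!: exI[of _ "(\<lambda>k. ennreal (s ^ k)) -` A"])
        then show ?thesis using Some unfolding X_def Jm_def
          by (auto intro: sigma_sets.Basic)
      qed
    qed
  qed
  have prodX: "(\<Prod>j\<in>I. X j \<omega>) = ennreal (h \<omega> * (\<Prod>i<N. s ^ xi n i \<omega>))" for \<omega>
    unfolding I_def using h(2) s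
    by (simp add: prod.reindex X_def prod_ennreal ennreal_mult' prod_nonneg)
  have "(\<integral>\<^sup>+\<omega>. ennreal (h \<omega> * (\<Prod>i<N. s ^ xi n i \<omega>)) \<partial>M) = (\<integral>\<^sup>+\<omega>. (\<Prod>j\<in>I. X j \<omega>) \<partial>M)"
    by (simp add: prodX)
  also have "\<dots> = (\<Prod>j\<in>I. \<integral>\<^sup>+\<omega>. X j \<omega> \<partial>M)"
    by (rule indep_vars_nn_integral) (use indX in \<open>auto simp: I_def\<close>)
  also have "\<dots> = (\<integral>\<^sup>+\<omega>. ennreal (h \<omega>) \<partial>M) * (\<Prod>i<N. ennreal (pgf p s))"
    unfolding I_def by (simp add: prod.reindex X_def nn_integral_xi_pow[OF GW s])
  also have "\<dots> = (\<integral>\<^sup>+\<omega>. ennreal (h \<omega>) \<partial>M) * ennreal (pgf p s ^ N)"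
    by (simp add: prod_ennreal ennreal_power[symmetric] pgf_def suminf_nonneg pgf_summable[OF s] s)
  finally show ?thesis .
qed

lemma one_step:
  assumes GW: "GW_process M p xi Z" and ln: "l \<le> n" and g: "\<And>k. 0 \<le> g k"
    and s: "0 \<le> s" "s \<le> 1"
  shows "(\<integral>\<^sup>+\<omega>. ennreal (g (Z l \<omega>) * s ^ Z (Suc n) \<omega>) \<partial>M)
       = (\<integral>\<^sup>+\<omega>. ennreal (g (Z l \<omega>) * pgf p s ^ Z n \<omega>) \<partial>M)"
proof -
  define T where "T N \<omega> = ennreal (g (Z l \<omega>) * indicator {\<omega>. Z n \<omega> = N} \<omega> * (\<Prod>i<N. s ^ xi n i \<omega>))" for N \<omega>
  define R where "R N \<omega> = ennreal (g (Z l \<omega>) * indicator {\<omega>. Z n \<omega> = N} \<omega> * pgf p s ^ N)" for N \<omega>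
  have fs: "0 \<le> pgf p s" unfolding pgf_def using s by (intro suminf_nonneg pgf_summable) auto
  have ZlM: "Z l \<in> measurable (Mn M xi n) (count_space UNIV)" using Z_meas_Mn[OF GW ln] .
  have ZnM: "Z n \<in> measurable (Mn M xi n) (count_space UNIV)" using Z_meas_Mn[OF GW order_refl] .
  have xiM: "xi k i \<in> measurable M (count_space UNIV)" for k i using GW_xi_meas[OF GW] .
  have ZlM': "Z l \<in> measurable M (count_space UNIV)" and ZnM': "Z n \<in> measurable M (count_space UNIV)"
    using Z_meas[OF GW] by auto
  have hM: "(\<lambda>\<omega>. g (Z l \<omega>) * indicator {\<omega>. Z n \<omega> = N} \<omega>) \<in> borel_measurable (Mn M xi n)" for N
  proof -
    have "{\<omega>. Z n \<omega> = N} \<inter> space (Mn M xi n) \<in> sets (Mn M xi n)"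
      using measurable_sets[OF ZnM, of "{N}"] by (simp add: vimage_def Int_commute)
    then show ?thesis using ZlM ZnM by measurable
  qed
  have "(\<integral>\<^sup>+\<omega>. ennreal (g (Z l \<omega>) * s ^ Z (Suc n) \<omega>) \<partial>M) = (\<integral>\<^sup>+\<omega>. (\<Sum>N. T N \<omega>) \<partial>M)"
  proof (rule nn_integral_cong)
    fix \<omega> assume w: "\<omega> \<in> space M"
    have Zs: "Z (Suc n) \<omega> = (\<Sum>i<Z n \<omega>. xi n i \<omega>)" using GW w by (simp add: GW_process_def)
    have "(\<lambda>r. if r = Z n \<omega> then T r \<omega> else 0) = (\<lambda>N. T N \<omega>)"
      by (auto simp: T_def)
    then have "(\<lambda>N. T N \<omega>) sums T (Z n \<omega>) \<omega>" using sums_single[of "Z n \<omega>" "\<lambda>N. T N \<omega>"] by simp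
    then have "(\<Sum>N. T N \<omega>) = T (Z n \<omega>) \<omega>" by (rule sums_unique[symmetric])
    also have "\<dots> = ennreal (g (Z l \<omega>) * s ^ Z (Suc n) \<omega>)"
      by (simp add: T_def Zs power_sum)
    finally show "ennreal (g (Z l \<omega>) * s ^ Z (Suc n) \<omega>) = (\<Sum>N. T N \<omega>)" by simp
  qed
  also have "\<dots> = (\<Sum>N. \<integral>\<^sup>+\<omega>. T N \<omega> \<partial>M)"
  proof (rule nn_integral_suminf)
    fix N
    have "(\<lambda>\<omega>. g (Z l \<omega>) * indicator {\<omega>. Z n \<omega> = N} \<omega>) \<in> borel_measurable M"
      using meas_Mn_M[OF GW hM] .
    then show "T N \<in> borel_measurable M" unfolding T_def using xiM by measurable
  qed
  also have "\<dots> = (\<Sum>N. \<integral>\<^sup>+\<omega>. R N \<omega> \<partial>M)"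
  proof (rule suminf_cong)
    fix N
    have "(\<integral>\<^sup>+\<omega>. T N \<omega> \<partial>M) = (\<integral>\<^sup>+\<omega>. ennreal (g (Z l \<omega>) * indicator {\<omega>. Z n \<omega> = N} \<omega>) \<partial>M) * ennreal (pgf p s ^ N)"
      unfolding T_def by (rule core_indep[OF GW hM _ s]) (simp add: g)
    also have "\<dots> = (\<integral>\<^sup>+\<omega>. ennreal (g (Z l \<omega>) * indicator {\<omega>. Z n \<omega> = N} \<omega>) * ennreal (pgf p s ^ N) \<partial>M)"
      by (rule nn_integral_multc[symmetric]) (use meas_Mn_M[OF GW hM] in measurable)
    also have "\<dots> = (\<integral>\<^sup>+\<omega>. R N \<omega> \<partial>M)"
      unfolding R_def by (simp add: ennreal_mult'[symmetric] g fs)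
    finally show "(\<integral>\<^sup>+\<omega>. T N \<omega> \<partial>M) = (\<integral>\<^sup>+\<omega>. R N \<omega> \<partial>M)" .
  qed
  also have "\<dots> = (\<integral>\<^sup>+\<omega>. (\<Sum>N. R N \<omega>) \<partial>M)"
  proof (rule nn_integral_suminf[symmetric])
    fix N
    have "(\<lambda>\<omega>. g (Z l \<omega>) * indicator {\<omega>. Z n \<omega> = N} \<omega>) \<in> borel_measurable M"
      using meas_Mn_M[OF GW hM] .
    then show "R N \<in> borel_measurable M" unfolding R_def by measurable
  qed
  also have "\<dots> = (\<integral>\<^sup>+\<omega>. ennreal (g (Z l \<omega>) * pgf p s ^ Z n \<omega>) \<partial>M)"
  proof (rule nn_integral_cong)
    fix \<omega> assume w: "\<omega> \<in> space M"
    have "(\<lambda>r. if r = Z n \<omega> then R r \<omega> else 0) = (\<lambda>N. R N \<omega>)"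
      by (auto simp: R_def)
    then have "(\<lambda>N. R N \<omega>) sums R (Z n \<omega>) \<omega>" using sums_single[of "Z n \<omega>" "\<lambda>N. R N \<omega>"] by simp
    then have "(\<Sum>N. R N \<omega>) = R (Z n \<omega>) \<omega>" by (rule sums_unique[symmetric])
    then show "(\<Sum>N. R N \<omega>) = ennreal (g (Z l \<omega>) * pgf p s ^ Z n \<omega>)"
      by (simp add: R_def)
  qed
  finally show ?thesis .
qed

lemma pgf_nonneg: "0 \<le> s \<Longrightarrow> s \<le> 1 \<Longrightarrow> 0 \<le> pgf p s"
  unfolding pgf_def by (intro suminf_nonneg pgf_summable) auto

lemma pgf_le1: "0 \<le> s \<Longrightarrow> s \<le> 1 \<Longrightarrow> pgf p s \<le> 1"
proof -
  assume s: "0 \<le> s" "s \<le> 1"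
  have "pgf p s \<le> (\<Sum>k. pmf p k)"
    unfolding pgf_def
    by (rule suminf_le) (use s pgf_summable[OF s] sums_summable[OF pmf_sums1[of p]] in
        \<open>auto intro!: mult_left_le simp: power_le_one\<close>)
  also have "\<dots> = 1" using pmf_sums1[of p] sums_unique by metis
  finally show ?thesis .
qed

lemma funpow_pgf_range: "0 \<le> s \<Longrightarrow> s \<le> 1 \<Longrightarrow> 0 \<le> (pgf p ^^ m) s \<and> (pgf p ^^ m) s \<le> 1"
  by (induction m) (auto simp: pgf_nonneg pgf_le1)

lemma iterate_step:
  assumes GW: "GW_process M p xi Z" and g: "\<And>k. 0 \<le> g k"
    and s: "0 \<le> s" "s \<le> 1"
  shows "(\<integral>\<^sup>+\<omega>. ennreal (g (Z l \<omega>) * s ^ Z (l + m) \<omega>) \<partial>M)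
       = (\<integral>\<^sup>+\<omega>. ennreal (g (Z l \<omega>) * ((pgf p ^^ m) s) ^ Z l \<omega>) \<partial>M)"
  using s
proof (induction m arbitrary: s)
  case 0
  then show ?case by simp
next
  case (Suc m)
  have "(\<integral>\<^sup>+\<omega>. ennreal (g (Z l \<omega>) * s ^ Z (l + Suc m) \<omega>) \<partial>M)
      = (\<integral>\<^sup>+\<omega>. ennreal (g (Z l \<omega>) * pgf p s ^ Z (l + m) \<omega>) \<partial>M)"
    using one_step[OF GW _ g Suc.prems, of l "l + m"] by simp
  also have "\<dots> = (\<integral>\<^sup>+\<omega>. ennreal (g (Z l \<omega>) * ((pgf p ^^ m) (pgf p s)) ^ Z l \<omega>) \<partial>M)"
    by (rule Suc.IH) (use Suc.prems in \<open>auto simp: pgf_nonneg pgf_le1\<close>)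
  also have "(pgf p ^^ m) (pgf p s) = (pgf p ^^ Suc m) s"
    by (simp add: funpow_Suc_right del: funpow.simps)
  finally show ?case .
qed

definition wdist :: "'a measure \<Rightarrow> (nat \<Rightarrow> 'a \<Rightarrow> nat) \<Rightarrow> nat \<Rightarrow> nat \<Rightarrow> real" where
  "wdist M Z l k = measure M {\<omega>\<in>space M. Z l \<omega> = k}"

lemma nn_integral_Z:
  assumes GW: "GW_process M p xi Z" and \<phi>: "\<And>k. 0 \<le> \<phi> k"
  shows "(\<integral>\<^sup>+\<omega>. ennreal (\<phi> (Z l \<omega>)) \<partial>M) = (\<Sum>k. ennreal (\<phi> k * wdist M Z l k))"
proof -
  interpret prob_space M using GW by (simp add: GW_process_def)
  have ZM: "Z l \<in> measurable M (count_space UNIV)" using Z_meas[OF GW] .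
  have setk: "{\<omega>\<in>space M. Z l \<omega> = k} \<in> sets M" for k
    using ZM by measurable
  have "(\<integral>\<^sup>+\<omega>. ennreal (\<phi> (Z l \<omega>)) \<partial>M) = (\<integral>\<^sup>+\<omega>. (\<Sum>k. ennreal (\<phi> k) * indicator {\<omega>\<in>space M. Z l \<omega> = k} \<omega>) \<partial>M)"
  proof (rule nn_integral_cong)
    fix \<omega> assume w: "\<omega> \<in> space M"
    define ind where "ind k = ennreal (\<phi> k) * indicator {\<omega>\<in>space M. Z l \<omega> = k} \<omega>" for k
    have "(\<lambda>r. if r = Z l \<omega> then ind r else 0) = ind"
      by (auto simp: indicator_def ind_def)
    then have "ind sums ind (Z l \<omega>)"
      using sums_single[of "Z l \<omega>" ind] by simp
    moreover have "ind (Z l \<omega>) = ennreal (\<phi> (Z l \<omega>))" using w by (simp add: ind_def)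
    ultimately show "ennreal (\<phi> (Z l \<omega>)) = (\<Sum>k. ennreal (\<phi> k) * indicator {\<omega>\<in>space M. Z l \<omega> = k} \<omega>)"
      unfolding ind_def by (simp add: sums_iff)
  qed
  also have "\<dots> = (\<Sum>k. \<integral>\<^sup>+\<omega>. ennreal (\<phi> k) * indicator {\<omega>\<in>space M. Z l \<omega> = k} \<omega> \<partial>M)"
    by (rule nn_integral_suminf) (use setk in measurable)
  also have "\<dots> = (\<Sum>k. ennreal (\<phi> k * wdist M Z l k))"
    by (simp add: nn_integral_cmult_indicator setk emeasure_eq_measure wdist_def ennreal_mult' \<phi>)
  finally show ?thesis .
qed

lemma stolz:
  fixes a b :: "nat \<Rightarrow> real"
  assumes b_mono: "\<And>n. b n < b (Suc n)" and b_lim: "filterlim b at_top sequentially"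
    and lim: "(\<lambda>n. (a (Suc n) - a n) / (b (Suc n) - b n)) \<longlonglongrightarrow> l"
  shows "(\<lambda>n. a n / b n) \<longlonglongrightarrow> l"
proof (rule LIMSEQ_I)
  fix e :: real assume e: "0 < e"
  from LIMSEQ_D[OF lim, of "e/2"] e obtain N where
    N: "\<And>n. n \<ge> N \<Longrightarrow> \<bar>(a (Suc n) - a n) / (b (Suc n) - b n) - l\<bar> < e/2" by auto
  have stepb: "\<bar>(a (Suc n) - l * b (Suc n)) - (a n - l * b n)\<bar> \<le> e/2 * (b (Suc n) - b n)" if "n \<ge> N" for n
  proof -
    have pos: "b (Suc n) - b n > 0" using b_mono[of n] by simp
    have "\<bar>(a (Suc n) - l * b (Suc n)) - (a n - l * b n)\<bar> = \<bar>(a (Suc n) - a n) / (b (Suc n) - b n) - l\<bar> * (b (Suc n) - b n)"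
      using pos by (simp add: field_simps abs_mult_pos' abs_divide flip: abs_mult)
    also have "\<dots> \<le> e/2 * (b (Suc n) - b n)"
      using N[OF that] pos by (intro mult_right_mono) auto
    finally show ?thesis .
  qed
  have acc: "\<bar>(a n - l * b n) - (a N - l * b N)\<bar> \<le> e/2 * (b n - b N)" if "n \<ge> N" for n
    using that
  proof (induction n rule: dec_induct)
    case base then show ?case by simp
  next
    case (step n)
    have "\<bar>(a (Suc n) - l * b (Suc n)) - (a N - l * b N)\<bar>
        \<le> \<bar>(a (Suc n) - l * b (Suc n)) - (a n - l * b n)\<bar> + \<bar>(a n - l * b n) - (a N - l * b N)\<bar>"
      by linarith
    also have "\<dots> \<le> e/2 * (b (Suc n) - b n) + e/2 * (b n - b N)"
      using step.IH stepb[OF step.hyps(1)] by (intro add_mono)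
    finally show ?case by (simp add: field_simps)
  qed
  define C where "C = \<bar>a N - l * b N\<bar> + e/2 * \<bar>b N\<bar>"
  have C: "C \<ge> 0" using e by (simp add: C_def)
  from b_lim have "eventually (\<lambda>n. max 1 (2 * C / e + 1) \<le> b n) sequentially"
    unfolding filterlim_at_top by blast
  then obtain M where M: "\<And>n. n \<ge> M \<Longrightarrow> max 1 (2 * C / e + 1) \<le> b n"
    by (auto simp: eventually_sequentially)
  show "\<exists>no. \<forall>n\<ge>no. norm (a n / b n - l) < e"
  proof (intro exI allI impI)
    fix n assume n: "n \<ge> max N M"
    have bn: "b n \<ge> 1" "b n \<ge> 2 * C / e + 1" using M[of n] n by auto
    have "\<bar>a n - l * b n\<bar> \<le> \<bar>a N - l * b N\<bar> + e/2 * (b n - b N)"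
      using acc[of n] n by linarith
    also have "\<dots> \<le> C + e/2 * b n"
      using e by (auto simp: C_def algebra_simps abs_if)
    finally have h: "\<bar>a n - l * b n\<bar> \<le> C + e/2 * b n" .
    have "C < e/2 * b n"
    proof -
      have "2 * C / e < b n" using bn by linarith
      then show ?thesis using e by (simp add: field_simps)
    qed
    with h have "\<bar>a n - l * b n\<bar> < e * b n" by linarith
    then have "\<bar>a n - l * b n\<bar> / b n < e" using bn by (simp add: field_simps)
    moreover have "a n / b n - l = (a n - l * b n) / b n" using bn by (simp add: field_simps)
    ultimately show "norm (a n / b n - l) < e" using bn by (simp add: abs_divide)
  qed
qed

lemma pow_diff_bounds:
  fixes x y :: real
  assumes "0 \<le> y" "y \<le> x"
  shows "real (Suc k) * y ^ k * (x - y) \<le> x ^ Suc k - y ^ Suc k"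
    and "x ^ Suc k - y ^ Suc k \<le> real (Suc k) * x ^ k * (x - y)"
proof -
  define S where "S = (\<Sum>p<Suc k. x ^ p * y ^ (k - p))"
  have eq: "x ^ Suc k - y ^ Suc k = (x - y) * S"
    unfolding S_def by (rule diff_power_eq_sum)
  have lo: "real (Suc k) * y ^ k \<le> S"
  proof -
    have "y ^ k \<le> x ^ p * y ^ (k - p)" if "p < Suc k" for p
    proof -
      have "y ^ k = y ^ p * y ^ (k - p)" using that by (simp flip: power_add)
      also have "\<dots> \<le> x ^ p * y ^ (k - p)"
        using assms by (intro mult_right_mono power_mono) auto
      finally show ?thesis .
    qed
    then have "of_nat (card {..<Suc k}) * y ^ k \<le> S"
      unfolding S_def by (intro sum_bounded_below) auto
    then show ?thesis by simp
  qed
  have hi: "S \<le> real (Suc k) * x ^ k"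
  proof -
    have "x ^ p * y ^ (k - p) \<le> x ^ k" if "p < Suc k" for p
    proof -
      have "x ^ p * y ^ (k - p) \<le> x ^ p * x ^ (k - p)"
        using assms by (intro mult_left_mono power_mono) auto
      also have "\<dots> = x ^ k" using that by (simp flip: power_add)
      finally show ?thesis .
    qed
    then have "S \<le> of_nat (card {..<Suc k}) * x ^ k"
      unfolding S_def by (intro sum_bounded_above) auto
    then show ?thesis by simp
  qed
  show "real (Suc k) * y ^ k * (x - y) \<le> x ^ Suc k - y ^ Suc k"
    unfolding eq using mult_right_mono[OF lo, of "x - y"] assms by (simp add: mult.commute)
  show "x ^ Suc k - y ^ Suc k \<le> real (Suc k) * x ^ k * (x - y)"
    unfolding eq using mult_right_mono[OF hi, of "x - y"] assms by (simp add: mult.commute)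
qed

lemma summable_Suc_pow:
  fixes s :: real
  assumes "0 \<le> s" "s < 1"
  shows "summable (\<lambda>k. real (Suc k) * s ^ k)"
proof -
  have "summable (\<lambda>n. diffs (\<lambda>_. 1::real) n * s ^ n)"
    by (rule termdiff_converges[where K=1]) (use assms in \<open>auto intro: summable_geometric\<close>)
  then show ?thesis by (simp add: diffs_def)
qed

lemma nonneg_le_suminf:
  fixes w :: "nat \<Rightarrow> real"
  assumes "\<And>k. 0 \<le> w k" "summable w"
  shows "w k \<le> suminf w"
proof -
  have "w k \<le> sum w {..<Suc k}" using assms by (simp add: sum_nonneg)
  also have "\<dots> \<le> suminf w" by (rule sum_le_suminf) (use assms in auto)
  finally show ?thesis .
qed

lemma series_pow_summable:
  fixes w :: "nat \<Rightarrow> real"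
  assumes "\<And>k. 0 \<le> w k" "summable w" "0 \<le> s" "s \<le> 1"
  shows "summable (\<lambda>k. w k * s ^ k)"
  by (rule summable_comparison_test[OF _ assms(2)])
     (use assms in \<open>auto intro!: exI[of _ 0] mult_left_le simp: power_le_one\<close>)

lemma series_deriv_summable:
  fixes w :: "nat \<Rightarrow> real"
  assumes "\<And>k. 0 \<le> w k" "summable w" "0 \<le> s" "s < 1"
  shows "summable (\<lambda>k. real (Suc k) * w (Suc k) * s ^ k)"
proof (rule summable_comparison_test[OF _ summable_mult[OF summable_Suc_pow[OF assms(3,4)], of "suminf w"]])
  show "\<exists>N. \<forall>n\<ge>N. norm (real (Suc n) * w (Suc n) * s ^ n) \<le> suminf w * (real (Suc n) * s ^ n)"
  proof (intro exI[of _ 0] allI impI)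
    fix n :: nat
    have "w (Suc n) * (real (Suc n) * s ^ n) \<le> suminf w * (real (Suc n) * s ^ n)"
      by (rule mult_right_mono[OF nonneg_le_suminf[OF assms(1,2)]]) (use assms in auto)
    then show "norm (real (Suc n) * w (Suc n) * s ^ n) \<le> suminf w * (real (Suc n) * s ^ n)"
      using assms by (simp add: mult_ac)
  qed
qed

lemma series_slope:
  fixes w :: "nat \<Rightarrow> real" and x y :: real
  assumes w: "\<And>k. 0 \<le> w k" "summable w" and xy: "0 \<le> y" "y < x" "x \<le> 1"
  shows "y < 1 \<Longrightarrow> (\<Sum>k. real (Suc k) * w (Suc k) * y ^ k) * (x - y) \<le> (\<Sum>k. w k * x ^ k) - (\<Sum>k. w k * y ^ k)"
    and "x < 1 \<Longrightarrow> (\<Sum>k. w k * x ^ k) - (\<Sum>k. w k * y ^ k) \<le> (\<Sum>k. real (Suc k) * w (Suc k) * x ^ k) * (x - y)"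
proof -
  have sx: "summable (\<lambda>k. w k * x ^ k)" and sy: "summable (\<lambda>k. w k * y ^ k)"
    using series_pow_summable[OF w] xy by auto
  have sd: "summable (\<lambda>k. w k * x ^ k - w k * y ^ k)" by (rule summable_diff[OF sx sy])
  have diff: "(\<Sum>k. w k * x ^ k) - (\<Sum>k. w k * y ^ k) = (\<Sum>k. w (Suc k) * (x ^ Suc k - y ^ Suc k))"
    using suminf_split_head[OF sd] suminf_diff[OF sx sy] by (simp add: algebra_simps)
  have sd': "summable (\<lambda>k. w (Suc k) * (x ^ Suc k - y ^ Suc k))"
    using sd summable_Suc_iff[where f="\<lambda>k. w k * x ^ k - w k * y ^ k"] by (simp add: algebra_simps)
  show "y < 1 \<Longrightarrow> (\<Sum>k. real (Suc k) * w (Suc k) * y ^ k) * (x - y) \<le> (\<Sum>k. w k * x ^ k) - (\<Sum>k. w k * y ^ k)"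
  proof -
    assume y1: "y < 1"
    have sg: "summable (\<lambda>k. real (Suc k) * w (Suc k) * y ^ k)" by (rule series_deriv_summable[OF w xy(1) y1])
    show ?thesis unfolding diff suminf_mult2[OF sg]
    proof (rule suminf_le)
      fix k
      show "real (Suc k) * w (Suc k) * y ^ k * (x - y) \<le> w (Suc k) * (x ^ Suc k - y ^ Suc k)"
        using mult_left_mono[OF pow_diff_bounds(1)[of y x k] w(1)[of "Suc k"]] xy by (simp add: mult_ac)
    qed (use sg sd' in \<open>auto intro: summable_mult2\<close>)
  qed
  show "x < 1 \<Longrightarrow> (\<Sum>k. w k * x ^ k) - (\<Sum>k. w k * y ^ k) \<le> (\<Sum>k. real (Suc k) * w (Suc k) * x ^ k) * (x - y)"
  proof -
    assume x1: "x < 1"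
    have sg: "summable (\<lambda>k. real (Suc k) * w (Suc k) * x ^ k)" by (rule series_deriv_summable[OF w _ x1]) (use xy in auto)
    show ?thesis unfolding diff suminf_mult2[OF sg]
    proof (rule suminf_le)
      fix k
      show "w (Suc k) * (x ^ Suc k - y ^ Suc k) \<le> real (Suc k) * w (Suc k) * x ^ k * (x - y)"
        using mult_left_mono[OF pow_diff_bounds(2)[of y x k] w(1)[of "Suc k"]] xy by (simp add: mult_ac)
    qed (use sg sd' in \<open>auto intro: summable_mult2\<close>)
  qed
qed

locale crit =
  fixes f :: "real \<Rightarrow> real" and \<alpha> :: real and L :: "real \<Rightarrow> real"
  assumes alpha_pos: "0 < \<alpha>"
    and f_rep: "\<And>s. 0 \<le> s \<Longrightarrow> s \<le> 1 \<Longrightarrow> f s = s + (1 - s) powr (1 + \<alpha>) * L (1 - s)"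
    and L_sv: "slowly_varying_at_0 L"
    and f_conv: "\<And>a b c. 0 \<le> a \<Longrightarrow> a < b \<Longrightarrow> b < c \<Longrightarrow> c \<le> 1 \<Longrightarrow>
                   (f b - f a) / (b - a) \<le> (f c - f b) / (c - b)"
    and f0: "f 0 < 1"
begin

definition U where "U y = f (1 - y) - (1 - y)"
definition sU where "sU a b = (U b - U a) / (b - a)"
definition r where "r y = U y / y"

lemma U_rep: "0 \<le> y \<Longrightarrow> y \<le> 1 \<Longrightarrow> U y = y powr (1 + \<alpha>) * L y"
  unfolding U_def using f_rep[of "1 - y"] by simp

lemma U0: "U 0 = 0"
  using U_rep[of 0] by simp

lemma U1: "U 1 = f 0"
  by (simp add: U_def)

lemma f_eq: "f s = s + U (1 - s)"
  by (simp add: U_def)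

lemma U_conv:
  assumes "0 \<le> a" "a < b" "b < c" "c \<le> 1"
  shows "sU a b \<le> sU b c"
proof -
  have h: "(f (1 - b) - f (1 - c)) / ((1 - b) - (1 - c)) \<le> (f (1 - a) - f (1 - b)) / ((1 - a) - (1 - b))"
    using assms by (intro f_conv) auto
  have e1: "sU a b = 1 - (f (1 - a) - f (1 - b)) / ((1 - a) - (1 - b))"
    using assms by (simp add: sU_def U_def field_simps)
  have e2: "sU b c = 1 - (f (1 - b) - f (1 - c)) / ((1 - b) - (1 - c))"
    using assms by (simp add: sU_def U_def field_simps)
  show ?thesis using h e1 e2 by linarith
qed

lemma U_conv3:
  assumes "0 \<le> a" "a < b" "b < c" "c \<le> 1"
  shows "sU a b \<le> sU a c" "sU a c \<le> sU b c"
proof -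
  have P: "sU a b \<le> sU b c" by (rule U_conv[OF assms])
  have e1: "(b - a) * sU a b = U b - U a" and e2: "(c - b) * sU b c = U c - U b"
    using assms by (simp_all add: sU_def)
  have e: "sU a c = ((b - a) * sU a b + (c - b) * sU b c) / (c - a)"
    unfolding e1 e2 by (simp add: sU_def)
  have "(b - a) * sU a b + (c - b) * sU a b \<le> (b - a) * sU a b + (c - b) * sU b c"
    using P assms by (intro add_left_mono mult_left_mono) auto
  moreover have "(b - a) * sU a b + (c - b) * sU a b = (c - a) * sU a b" by (simp add: algebra_simps)
  ultimately show "sU a b \<le> sU a c" unfolding e using assms by (simp add: field_simps)
  have "(b - a) * sU a b + (c - b) * sU b c \<le> (b - a) * sU b c + (c - b) * sU b c"
    using P assms by (intro add_right_mono mult_left_mono) auto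
  moreover have "(b - a) * sU b c + (c - b) * sU b c = (c - a) * sU b c" by (simp add: algebra_simps)
  ultimately show "sU a c \<le> sU b c" unfolding e using assms by (simp add: field_simps)
qed

lemma sU0: "0 < a \<Longrightarrow> sU 0 a = r a"
  by (simp add: sU_def r_def U0)

lemma U_pos_near0: "\<exists>\<delta>>0. \<forall>y. 0 < y \<longrightarrow> y < \<delta> \<longrightarrow> 0 < U y"
proof -
  have "eventually (\<lambda>x. L x > 0) (at_right 0)" using L_sv by (simp add: slowly_varying_at_0_def)
  then obtain b where b: "b > 0" "\<And>y. y > 0 \<Longrightarrow> y < b \<Longrightarrow> L y > 0"
    unfolding eventually_at_right_field by auto
  show ?thesis
  proof (intro exI[of _ "min b 1"] conjI allI impI)
    fix y :: real assume y: "0 < y" "y < min b 1"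
    then show "0 < U y" using U_rep[of y] b(2)[of y] by simp
  qed (use b in auto)
qed

lemma r_mono:
  assumes "0 < a" "a \<le> b" "b \<le> 1"
  shows "r a \<le> r b"
proof (cases "a = b")
  case False
  then have "sU 0 a \<le> sU 0 b" using U_conv3(1)[of 0 a b] assms by auto
  then show ?thesis using assms by (simp add: sU0)
qed simp

lemma U_pos:
  assumes "0 < y" "y \<le> 1"
  shows "0 < U y"
proof -
  obtain \<delta> where d: "\<delta> > 0" "\<And>y. 0 < y \<Longrightarrow> y < \<delta> \<Longrightarrow> 0 < U y"
    using U_pos_near0 by auto
  define a where "a = min (\<delta>/2) y"
  have a: "0 < a" "a < \<delta>" "a \<le> y" using d assms by (auto simp: a_def)
  have "0 < r a" using d(2)[OF a(1,2)] a by (simp add: r_def)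
  also have "\<dots> \<le> r y" by (rule r_mono) (use a assms in auto)
  finally show ?thesis using assms by (simp add: r_def divide_pos_pos zero_less_divide_iff)
qed

lemma U_strict_mono:
  assumes "0 \<le> a" "a < b" "b \<le> 1"
  shows "U a < U b"
proof (cases "a = 0")
  case True then show ?thesis using U_pos[of b] assms by (simp add: U0)
next
  case False
  then have a: "0 < a" using assms by simp
  have "0 < r a" using U_pos[of a] a assms by (simp add: r_def)
  also have "r a = sU 0 a" using a by (simp add: sU0)
  also have "\<dots> \<le> sU 0 b" using U_conv3(1)[of 0 a b] a assms by simp
  also have "\<dots> \<le> sU a b" using U_conv3(2)[of 0 a b] a assms by simp
  finally show ?thesis using assms by (simp add: sU_def zero_less_divide_iff)
qed

lemma U_mono: "0 \<le> a \<Longrightarrow> a \<le> b \<Longrightarrow> b \<le> 1 \<Longrightarrow> U a \<le> U b"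
  using U_strict_mono[of a b] by (cases "a = b") auto

lemma U_le: 
  assumes "0 \<le> y" "y \<le> 1"
  shows "U y \<le> f 0 * y"
proof (cases "y = 0")
  case True then show ?thesis by (simp add: U0)
next
  case False
  then have "r y \<le> r 1" using assms by (intro r_mono) auto
  then show ?thesis using False assms by (simp add: r_def U1 field_simps)
qed

lemma Urv:
  assumes c: "0 < c"
  shows "((\<lambda>y. U (c * y) / U y) \<longlongrightarrow> c powr (1 + \<alpha>)) (at_right 0)"
proof -
  have L1: "((\<lambda>x. L (c * x) / L x) \<longlongrightarrow> 1) (at_right 0)"
    using L_sv c by (simp add: slowly_varying_at_0_def)
  have L2: "((\<lambda>x. c powr (1 + \<alpha>) * (L (c * x) / L x)) \<longlongrightarrow> c powr (1 + \<alpha>)) (at_right 0)"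
    using tendsto_mult_left[OF L1, of "c powr (1 + \<alpha>)"] by simp
  have ev1: "eventually (\<lambda>x. L x > 0) (at_right 0)" using L_sv by (simp add: slowly_varying_at_0_def)
  have ev2: "eventually (\<lambda>y. 0 < y \<and> y < min 1 (1/c)) (at_right (0::real))"
    unfolding eventually_at_right_field using c by (intro exI[of _ "min 1 (1/c)"]) auto
  have "eventually (\<lambda>y. c powr (1 + \<alpha>) * (L (c * y) / L y) = U (c * y) / U y) (at_right 0)"
    using ev1 ev2
  proof eventually_elim
    case (elim y)
    have cy: "0 \<le> c * y" "c * y \<le> 1" using elim c by (auto simp: field_simps)
    have "U (c * y) / U y = ((c * y) powr (1 + \<alpha>) * L (c * y)) / (y powr (1 + \<alpha>) * L y)"
      using U_rep[OF cy] U_rep[of y] elim by simp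
    also have "\<dots> = c powr (1 + \<alpha>) * (L (c * y) / L y)"
      using elim by (simp add: powr_mult field_simps)
    finally show ?case by simp
  qed
  then show ?thesis using L2 by (rule Lim_transform_eventually[rotated])
qed

lemma r_pos: "0 < y \<Longrightarrow> y \<le> 1 \<Longrightarrow> 0 < r y"
  using U_pos by (simp add: r_def)

lemma r_tends0: "(r \<longlongrightarrow> 0) (at_right 0)"
proof -
  define \<rho> where "\<rho> = (1 + (1/2::real) powr \<alpha>) / 2"
  have "(2::real) powr 0 < 2 powr \<alpha>" using alpha_pos by (intro powr_less_mono) auto
  then have h0: "1 < (2::real) powr \<alpha>" by simp
  have h1: "(1/2::real) powr \<alpha> < 1" using h0 by (simp add: powr_divide)
  have "0 \<le> (1/2::real) powr \<alpha>" by simp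
  have rho1: "\<rho> < 1" using h1 unfolding \<rho>_def by simp
  have "0 < 1 + (1/2::real) powr \<alpha>" by (rule add_pos_nonneg) auto
  then have rho2: "0 < \<rho>" unfolding \<rho>_def by simp
  note rho = rho1 rho2
  have lim: "(1/2::real) powr (1 + \<alpha>) < \<rho> / 2"
    using h1 by (simp add: powr_add \<rho>_def)
  have "eventually (\<lambda>y. U ((1/2) * y) / U y < \<rho> / 2) (at_right 0)"
    using order_tendstoD(2)[OF Urv[of "1/2"] lim] by simp
  moreover have "eventually (\<lambda>y. 0 < y \<and> y < (1::real)) (at_right 0)"
    unfolding eventually_at_right_field by (intro exI[of _ 1]) auto
  ultimately have "eventually (\<lambda>y. U ((1/2) * y) / U y < \<rho> / 2 \<and> 0 < y \<and> y < 1) (at_right 0)"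
    by (rule eventually_conj)
  then obtain y0 where y0: "y0 > 0" "\<And>y. 0 < y \<Longrightarrow> y < y0 \<Longrightarrow> U ((1/2) * y) / U y < \<rho> / 2 \<and> 0 < y \<and> y < 1"
    unfolding eventually_at_right_field by auto
  have half: "r (y / 2) \<le> \<rho> * r y" if "0 < y" "y < y0" for y
  proof -
    have y: "0 < y" "y < 1" "U ((1/2) * y) / U y < \<rho> / 2" using y0(2)[OF that] by auto
    have Uy: "0 < U y" using U_pos[of y] y by simp
    have "U (y/2) < \<rho> / 2 * U y" using y(3) Uy by (simp add: field_simps)
    then show ?thesis using y Uy by (simp add: r_def field_simps)
  qed
  define y1 where "y1 = y0 / 2"
  have y1: "0 < y1" "y1 < y0" using y0 by (auto simp: y1_def)
  have y1le: "y1 < 1" using y0(2)[of y1] y1 by auto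
  have iter: "r (y1 / 2 ^ k) \<le> \<rho> ^ k * r y1" for k
  proof (induction k)
    case 0 then show ?case by simp
  next
    case (Suc k)
    have yk: "0 < y1 / 2 ^ k" using y1 by simp
    have "y1 / 2 ^ k \<le> y1" using y1 by (simp add: field_simps)
    then have yk2: "y1 / 2 ^ k < y0" using y1 by linarith
    have "r (y1 / 2 ^ Suc k) = r ((y1 / 2 ^ k) / 2)" by (simp add: field_simps)
    also have "\<dots> \<le> \<rho> * r (y1 / 2 ^ k)" by (rule half) (use yk(1) yk2 in auto)
    also have "\<dots> \<le> \<rho> * (\<rho> ^ k * r y1)" using Suc rho by (intro mult_left_mono) auto
    finally show ?case by simp
  qed
  show ?thesis
  proof (rule tendstoI)
    fix e :: real assume e: "0 < e"
    have "(\<lambda>k. \<rho> ^ k * r y1) \<longlonglongrightarrow> 0 * r y1"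
      by (intro tendsto_mult LIMSEQ_power_zero tendsto_const) (use rho in auto)
    then have "eventually (\<lambda>k. \<rho> ^ k * r y1 < e) sequentially"
      using order_tendstoD(2)[of _ 0 sequentially e] e by simp
    then obtain k where k: "\<rho> ^ k * r y1 < e" by (auto simp: eventually_sequentially)
    show "eventually (\<lambda>y. dist (r y) 0 < e) (at_right 0)"
      unfolding eventually_at_right_field
    proof (intro exI[of _ "y1 / 2 ^ k"] conjI allI impI)
      show "0 < y1 / 2 ^ k" using y1 by simp
      fix y :: real assume y: "0 < y" "y < y1 / 2 ^ k"
      have "y1 / 2 ^ k \<le> y1" using y1 by (simp add: field_simps)
      then have "y < 1" using y y1le by linarith
      have "0 < r y" using r_pos y \<open>y < 1\<close> by simp
      moreover have "y1 / 2 ^ k \<le> 1" using \<open>y1 / 2 ^ k \<le> y1\<close> y1le by linarith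
      moreover have "r y \<le> r (y1 / 2 ^ k)" by (rule r_mono) (use y \<open>y1 / 2 ^ k \<le> 1\<close> in auto)
      ultimately show "dist (r y) 0 < e" using iter[of k] k by simp
    qed
  qed
qed

definition q where "q n = (f ^^ n) 0"
definition Q where "Q n = 1 - q n"
definition d where "d n = U (Q n)"
definition eps where "eps n = r (Q n)"

lemma Q0: "Q 0 = 1" by (simp add: Q_def q_def)

lemma Q_Suc: "Q (Suc n) = Q n - U (Q n)"
  by (simp add: Q_def q_def f_eq)

lemma Q_range: "0 < Q n \<and> Q n \<le> 1"
proof (induction n)
  case 0 then show ?case by (simp add: Q0)
next
  case (Suc n)
  have "U (Q n) \<le> f 0 * Q n" using U_le[of "Q n"] Suc by simp
  moreover have "0 < U (Q n)" using U_pos[of "Q n"] Suc by simp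
  moreover have "f 0 * Q n < 1 * Q n" using f0 Suc by (intro mult_strict_right_mono) auto
  ultimately have "U (Q n) < Q n" by linarith
  then show ?case using Suc \<open>0 < U (Q n)\<close> by (simp add: Q_Suc)
qed

lemma Q_pos: "0 < Q n" and Q_le1: "Q n \<le> 1"
  using Q_range by auto

lemma d_pos: "0 < d n"
  using U_pos Q_range by (simp add: d_def)

lemma Q_Suc_less: "Q (Suc n) < Q n"
  using d_pos[of n] by (simp add: Q_Suc d_def)

lemma d_Suc_less: "d (Suc n) < d n"
  unfolding d_def by (rule U_strict_mono) (use Q_Suc_less[of n] Q_range[of n] Q_range[of "Suc n"] in auto)

lemma d_le_d0: "d n \<le> d 0"
  by (induction n) (auto intro: order.trans[OF less_imp_le[OF d_Suc_less]])

lemma d_antimono: "m \<le> n \<Longrightarrow> d n \<le> d m"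
  by (induction n rule: dec_induct) (auto intro: order.trans[OF less_imp_le[OF d_Suc_less]])

lemma Q_tends0: "Q \<longlonglongrightarrow> 0"
proof -
  have dec: "decseq Q" using Q_Suc_less by (intro decseq_SucI less_imp_le)
  obtain l where l: "Q \<longlonglongrightarrow> l" "\<forall>i. l \<le> Q i"
    using decseq_convergent[OF dec, of 0] Q_range less_imp_le by blast
  have l0: "0 \<le> l" using LIMSEQ_le_const[OF l(1), of 0] Q_range less_imp_le by blast
  have "l = 0"
  proof (rule ccontr)
    assume "l \<noteq> 0"
    then have lp: "0 < l" using l0 by simp
    have l1: "l \<le> 1" using l(2) Q_le1[of 0] by (meson order.trans)
    have Ul: "0 < U l" using U_pos[OF lp l1] .
    have bound: "Q n \<le> 1 - real n * U l" for n
    proof (induction n)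
      case 0 then show ?case by (simp add: Q0)
    next
      case (Suc n)
      have "U l \<le> U (Q n)" by (rule U_mono) (use l0 l(2) Q_le1 in auto)
      then show ?case using Suc by (simp add: Q_Suc algebra_simps)
    qed
    obtain n :: nat where n: "1 / U l < real n" using reals_Archimedean2 by blast
    then have "1 < real n * U l" using Ul by (simp add: field_simps)
    then show False using bound[of n] Q_pos[of n] by linarith
  qed
  then show ?thesis using l by simp
qed

lemma Q_at_right: "filterlim Q (at_right 0) sequentially"
  by (rule tendsto_imp_filterlim_at_right[OF Q_tends0]) (use Q_pos in auto)

lemma eps_tends0: "eps \<longlonglongrightarrow> 0"
  unfolding eps_def using filterlim_compose[OF r_tends0 Q_at_right] by simp

lemma D_lim: "((\<lambda>c. (c powr (1 + \<alpha>) - 1) / (c - 1)) \<longlongrightarrow> 1 + \<alpha>) (at 1)"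
proof -
  have "((\<lambda>z. z powr (1 + \<alpha>)) has_real_derivative (1 + \<alpha>) * 1 powr (1 + \<alpha> - 1)) (at 1)"
    by (rule has_real_derivative_powr) simp
  then have "((\<lambda>y. (y powr (1 + \<alpha>) - 1 powr (1 + \<alpha>)) / (y - 1)) \<longlongrightarrow> (1 + \<alpha>) * 1 powr (1 + \<alpha> - 1)) (at 1)"
    by (simp add: has_field_derivative_iff)
  then show ?thesis by simp
qed

lemma Q_Suc_eps: "Q (Suc n) = Q n * (1 - eps n)"
  using Q_pos[of n] by (simp add: Q_Suc eps_def r_def field_simps)

lemma Q_ratio: "(\<lambda>n. Q (Suc n) / Q n) \<longlonglongrightarrow> 1"
proof -
  have "(\<lambda>n. 1 - eps n) \<longlonglongrightarrow> 1 - 0" by (intro tendsto_intros eps_tends0)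
  moreover have "Q (Suc n) / Q n = 1 - eps n" for n using Q_pos[of n] by (simp add: Q_Suc_eps)
  ultimately show ?thesis by simp
qed

lemma Urv_seq:
  assumes "0 < c"
  shows "(\<lambda>n. U (c * Q n) / U (Q n)) \<longlonglongrightarrow> c powr (1 + \<alpha>)"
  using filterlim_compose[OF Urv[OF assms] Q_at_right] by simp

lemma S_lim: "(\<lambda>n. sU (Q (Suc n)) (Q n) * Q n / U (Q n)) \<longlonglongrightarrow> 1 + \<alpha>"
proof (rule tendstoI)
  fix e :: real assume e: "0 < e"
  define D where "D c = (c powr (1 + \<alpha>) - 1) / (c - 1)" for c :: real
  have "eventually (\<lambda>c. dist (D c) (1 + \<alpha>) < e/2) (at 1)"
    using tendstoD[OF D_lim, of "e/2"] e by (simp add: D_def)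
  then obtain \<delta> where \<delta>: "\<delta> > 0" "\<And>c. c \<noteq> 1 \<Longrightarrow> dist c 1 < \<delta> \<Longrightarrow> dist (D c) (1 + \<alpha>) < e/2"
    unfolding eventually_at by auto
  define h where "h = min \<delta> (1/2) / 2"
  have h: "0 < h" "h < \<delta>" "h \<le> 1/4" using \<delta> by (auto simp: h_def)
  define c where "c = 1 - h"
  define b where "b = 1 + h"
  have c: "0 < c" "c < 1" and b: "1 < b" using h by (auto simp: c_def b_def)
  have Dc: "dist (D c) (1 + \<alpha>) < e/2" using \<delta>(2)[of c] h by (simp add: c_def dist_real_def)
  have Db: "dist (D b) (1 + \<alpha>) < e/2" using \<delta>(2)[of b] h by (simp add: b_def dist_real_def)
  have E1: "eventually (\<lambda>n. c < Q (Suc n) / Q n) sequentially"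
    using order_tendstoD(1)[OF Q_ratio c(2)] .
  have E2: "eventually (\<lambda>n. Q n < 1 / b) sequentially"
    using order_tendstoD(2)[OF Q_tends0, of "1/b"] b by simp
  have E3: "eventually (\<lambda>n. dist (U (c * Q n) / U (Q n)) (c powr (1 + \<alpha>)) < e * (1 - c) / 2) sequentially"
    using tendstoD[OF Urv_seq[OF c(1)], of "e * (1 - c) / 2"] e c by simp
  have E4: "eventually (\<lambda>n. dist (U (b * Q n) / U (Q n)) (b powr (1 + \<alpha>)) < e * (b - 1) / 2) sequentially"
    using tendstoD[OF Urv_seq, of b "e * (b - 1) / 2"] e b by simp
  show "eventually (\<lambda>n. dist (sU (Q (Suc n)) (Q n) * Q n / U (Q n)) (1 + \<alpha>) < e) sequentially"
    using E1 E2 E3 E4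
  proof eventually_elim
    case (elim n)
    define y where "y = Q n"
    define y' where "y' = Q (Suc n)"
    define u where "u = U y"
    have y: "0 < y" "y \<le> 1" using Q_range[of n] by (auto simp: y_def)
    have y'y: "y' < y" "0 < y'" using Q_Suc_less[of n] Q_pos[of "Suc n"] by (auto simp: y_def y'_def)
    have u: "0 < u" using U_pos[OF y] by (simp add: u_def)
    have cy: "c * y < y'" using elim(1) y by (simp add: y_def y'_def field_simps)
    have by1: "b * y \<le> 1" using elim(2) b by (simp add: y_def field_simps)
    have by2: "y < b * y" using b y by simp
    have lo: "sU (c * y) y \<le> sU y' y"
      using U_conv3(2)[of "c * y" y' y] cy y'y y c by simp
    have hi: "sU y' y \<le> sU y (b * y)"
      using U_conv[of y' y "b * y"] y'y by2 by1 by simp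
    have lo_eq: "sU (c * y) y * y / u = (1 - U (c * y) / u) / (1 - c)"
      using y u c unfolding u_def by (simp add: sU_def field_simps)
    have hi_eq: "sU y (b * y) * y / u = (U (b * y) / u - 1) / (b - 1)"
      using y u b unfolding u_def by (simp add: sU_def field_simps)
    have X3: "\<bar>U (c * y) / u - c powr (1 + \<alpha>)\<bar> < e * (1 - c) / 2"
      using elim(3) by (simp add: y_def u_def dist_real_def)
    have X4: "\<bar>U (b * y) / u - b powr (1 + \<alpha>)\<bar> < e * (b - 1) / 2"
      using elim(4) by (simp add: y_def u_def dist_real_def)
    have Dc': "D c = (1 - c powr (1 + \<alpha>)) / (1 - c)" using c by (simp add: D_def field_simps)
    have Db': "D b = (b powr (1 + \<alpha>) - 1) / (b - 1)" using b by (simp add: D_def)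
    have "(1 - U (c * y) / u) / (1 - c) > (1 - c powr (1 + \<alpha>) - e * (1 - c) / 2) / (1 - c)"
    proof (rule divide_strict_right_mono)
      have "U (c * y) / u - c powr (1 + \<alpha>) < e * (1 - c) / 2" using abs_ge_self[of "U (c * y) / u - c powr (1 + \<alpha>)"] X3 by linarith
      then show "1 - c powr (1 + \<alpha>) - e * (1 - c) / 2 < 1 - U (c * y) / u" by linarith
    qed (use c in simp)
    also have "(1 - c powr (1 + \<alpha>) - e * (1 - c) / 2) / (1 - c) = D c - e/2"
      using c by (simp add: Dc' field_simps)
    finally have L1: "sU (c * y) y * y / u > D c - e/2" using lo_eq by simp
    have "(U (b * y) / u - 1) / (b - 1) < (b powr (1 + \<alpha>) - 1 + e * (b - 1) / 2) / (b - 1)"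
    proof (rule divide_strict_right_mono)
      have "U (b * y) / u - b powr (1 + \<alpha>) < e * (b - 1) / 2" using abs_ge_self[of "U (b * y) / u - b powr (1 + \<alpha>)"] X4 by linarith
      then show "U (b * y) / u - 1 < b powr (1 + \<alpha>) - 1 + e * (b - 1) / 2" by linarith
    qed (use b in simp)
    also have "(b powr (1 + \<alpha>) - 1 + e * (b - 1) / 2) / (b - 1) = D b + e/2"
      using b by (simp add: Db' field_simps)
    finally have L2: "sU y (b * y) * y / u < D b + e/2" using hi_eq by simp
    have yu: "0 < y / u" using y u by simp
    have M1: "sU (c * y) y * y / u \<le> sU y' y * y / u"
      using mult_right_mono[OF lo less_imp_le[OF yu]] by (simp add: field_simps)
    have M2: "sU y' y * y / u \<le> sU y (b * y) * y / u"
      using mult_right_mono[OF hi less_imp_le[OF yu]] by (simp add: field_simps)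
    have "D c - e/2 > 1 + \<alpha> - e" using Dc unfolding dist_real_def by linarith
    moreover have "D b + e/2 < 1 + \<alpha> + e" using Db unfolding dist_real_def by linarith
    ultimately have "\<bar>sU y' y * y / u - (1 + \<alpha>)\<bar> < e" using L1 L2 M1 M2 by linarith
    then show ?case by (simp add: dist_real_def y_def y'_def u_def)
  qed
qed

definition S where "S n = sU (Q (Suc n)) (Q n) * Q n / U (Q n)"
definition rho where "rho n = d (Suc n) / d n"

lemma eps_pos: "0 < eps n"
  using r_pos Q_range by (simp add: eps_def)

lemma eps_lt1: "eps n < 1"
proof -
  have "0 < Q (Suc n)" by (rule Q_pos)
  then have "0 < Q n * (1 - eps n)" by (simp add: Q_Suc_eps)
  then show ?thesis using Q_pos[of n] by (simp add: zero_less_mult_iff)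
qed

lemma I1: "sU (Q (Suc n)) (Q n) = S n * eps n"
  using Q_pos[of n] d_pos[of n] by (simp add: S_def eps_def r_def d_def)

lemma I2: "rho n = 1 - sU (Q (Suc n)) (Q n)"
proof -
  have dn: "Q n - Q (Suc n) = d n" by (simp add: Q_Suc d_def)
  have "sU (Q (Suc n)) (Q n) = (d n - d (Suc n)) / d n"
    unfolding sU_def dn by (simp add: d_def)
  then show ?thesis using d_pos[of n] by (simp add: rho_def field_simps)
qed

lemma rho_pos: "0 < rho n"
  using d_pos by (simp add: rho_def)

lemma rho_lim: "rho \<longlonglongrightarrow> 1"
proof -
  have "(\<lambda>n. 1 - S n * eps n) \<longlonglongrightarrow> 1 - (1 + \<alpha>) * 0"
    by (intro tendsto_intros eps_tends0) (use S_lim in \<open>simp add: S_def\<close>)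
  moreover have "rho = (\<lambda>n. 1 - S n * eps n)" using I2 I1 by auto
  ultimately show ?thesis by simp
qed

lemma S_lim': "S \<longlonglongrightarrow> 1 + \<alpha>"
proof -
  have "S = (\<lambda>n. sU (Q (Suc n)) (Q n) * Q n / U (Q n))" by (rule ext) (simp add: S_def)
  then show ?thesis using S_lim by simp
qed

lemma I3: "1 / eps (Suc n) - 1 / eps n = (S n - 1) / rho n"
proof -
  have e: "eps (Suc n) = eps n * rho n / (1 - eps n)"
  proof -
    have "eps (Suc n) = U (Q (Suc n)) / Q (Suc n)" by (simp add: eps_def r_def)
    also have "\<dots> = (rho n * U (Q n)) / (Q n * (1 - eps n))"
      using d_pos[of n] by (simp add: rho_def d_def Q_Suc_eps)
    also have "\<dots> = eps n * rho n / (1 - eps n)"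
      using Q_pos[of n] by (simp add: eps_def r_def)
    finally show ?thesis .
  qed
  have ep: "0 < eps n" "eps n < 1" using eps_pos eps_lt1 by auto
  have rp: "0 < rho n" by (rule rho_pos)
  have e2: "1 / eps (Suc n) = (1 - eps n) / (eps n * rho n)"
    unfolding e using ep rp by (simp add: field_simps)
  have a: "1 / eps (Suc n) - 1 / eps n = (1 - eps n - rho n) / (rho n * eps n)"
    unfolding e2 using ep rp by (simp add: field_simps)
  have b: "1 - eps n - rho n = (S n - 1) * eps n"
    by (simp add: I2 I1 algebra_simps)
  have c: "(S n - 1) * eps n / (rho n * eps n) = (S n - 1) / rho n"
    using ep rp by simp
  show ?thesis using a b c by simp
qed

lemma n_eps_lim: "(\<lambda>n. real n * eps n) \<longlonglongrightarrow> 1 / \<alpha>"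
proof -
  have st: "(\<lambda>n. (1 / eps n) / real n) \<longlonglongrightarrow> \<alpha>"
  proof (rule stolz)
    show "\<And>n. real n < real (Suc n)" by simp
    show "filterlim real at_top sequentially" by (rule filterlim_real_sequentially)
    have "(\<lambda>n. (S n - 1) / rho n) \<longlonglongrightarrow> ((1 + \<alpha>) - 1) / 1"
      by (intro tendsto_intros S_lim' rho_lim) simp
    then show "(\<lambda>n. (1 / eps (Suc n) - 1 / eps n) / (real (Suc n) - real n)) \<longlonglongrightarrow> \<alpha>"
      by (simp add: I3)
  qed
  have "(\<lambda>n. inverse ((1 / eps n) / real n)) \<longlonglongrightarrow> inverse \<alpha>"
    by (rule tendsto_inverse[OF st]) (use alpha_pos in simp)
  moreover have "(\<lambda>n. inverse ((1 / eps n) / real n)) = (\<lambda>n. real n * eps n)"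
    by (rule ext) (simp add: field_simps)
  ultimately show ?thesis by (simp add: inverse_eq_divide)
qed

lemma K1: "(\<lambda>n. real (Suc n) * (d n / d (Suc n) - 1)) \<longlonglongrightarrow> (1 + \<alpha>) / \<alpha>"
proof -
  have x: "d n / d (Suc n) - 1 = S n * eps n / rho n" for n
  proof -
    have "d n / d (Suc n) = 1 / rho n" by (simp add: rho_def)
    then show ?thesis using rho_pos[of n] by (simp add: field_simps I2 I1)
  qed
  have "(\<lambda>n. (real n * eps n) * S n / rho n + S n * eps n / rho n) \<longlonglongrightarrow> (1 / \<alpha>) * (1 + \<alpha>) / 1 + (1 + \<alpha>) * 0 / 1"
    by (intro tendsto_intros n_eps_lim S_lim' rho_lim eps_tends0) simp_all
  moreover have "real (Suc n) * (d n / d (Suc n) - 1) = (real n * eps n) * S n / rho n + S n * eps n / rho n" for n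
    using rho_pos[of n] by (simp add: x field_simps)
  ultimately show ?thesis using alpha_pos by (simp add: field_simps)
qed

definition T where "T j = (\<Sum>m<j. 1 / d m)"
definition V where "V j = (\<Sum>m<j. Q (Suc m) / d m)"

lemma T_ge: "real j / d 0 \<le> T j"
proof -
  have "(\<Sum>m<j. 1 / d 0) \<le> T j"
    unfolding T_def by (intro sum_mono divide_left_mono d_le_d0) (use d_pos in auto)
  then show ?thesis by simp
qed

lemma filterlim_ge_lin:
  fixes B :: "nat \<Rightarrow> real"
  assumes "\<And>j. real j * c \<le> B j" "0 < c"
  shows "filterlim B at_top sequentially"
proof -
  have "filterlim (\<lambda>j. real j * c) at_top sequentially"
    by (rule filterlim_tendsto_pos_mult_at_top[OF tendsto_const assms(2) filterlim_real_sequentially, THEN filterlim_cong[THEN iffD1, rotated 3]])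
       (auto simp: mult.commute)
  then show ?thesis
    by (rule filterlim_at_top_mono) (use assms in auto)
qed

lemma W_lim: "(\<lambda>j. T j / (real j / d j)) \<longlonglongrightarrow> \<alpha> / (2 * \<alpha> + 1)"
proof (rule stolz)
  fix n
  have "real n / d n \<le> real n / d (Suc n)"
    by (intro divide_left_mono less_imp_le[OF d_Suc_less]) (use d_pos in auto)
  also have "\<dots> < real (Suc n) / d (Suc n)" using d_pos[of "Suc n"] by (simp add: divide_strict_right_mono)
  finally show "real n / d n < real (Suc n) / d (Suc n)" .
next
  show "filterlim (\<lambda>j. real j / d j) at_top sequentially"
  proof (rule filterlim_ge_lin[of "1 / d 0"])
    fix j
    show "real j * (1 / d 0) \<le> real j / d j"
      using d_le_d0[of j] d_pos[of j] by (simp add: divide_left_mono)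
  qed (use d_pos in simp)
next
  have eq: "(T (Suc n) - T n) / (real (Suc n) / d (Suc n) - real n / d n)
          = 1 / (1 + real (Suc n) * (d n / d (Suc n) - 1))" for n
    using d_pos[of n] d_pos[of "Suc n"] by (simp add: T_def field_simps)
  have "(\<lambda>n. 1 / (1 + real (Suc n) * (d n / d (Suc n) - 1))) \<longlonglongrightarrow> 1 / (1 + (1 + \<alpha>) / \<alpha>)"
    by (intro tendsto_intros K1) (use alpha_pos in \<open>simp add: field_simps add_pos_pos\<close>)
  moreover have "1 / (1 + (1 + \<alpha>) / \<alpha>) = \<alpha> / (2 * \<alpha> + 1)"
    using alpha_pos by (simp add: field_simps)
  ultimately show "(\<lambda>n. (T (Suc n) - T n) / (real (Suc n) / d (Suc n) - real n / d n)) \<longlonglongrightarrow> \<alpha> / (2 * \<alpha> + 1)"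
    unfolding eq by simp
qed

lemma VT_lim: "(\<lambda>j. V j / T j) \<longlonglongrightarrow> 0"
proof (rule stolz)
  show "T n < T (Suc n)" for n using d_pos[of n] by (simp add: T_def)
  show "filterlim T at_top sequentially"
    by (rule filterlim_ge_lin[of "1 / d 0"]) (use T_ge d_pos in auto)
  have "(\<lambda>n. Q (Suc n)) \<longlonglongrightarrow> 0" using Q_tends0 by (rule LIMSEQ_Suc)
  moreover have "(V (Suc n) - V n) / (T (Suc n) - T n) = Q (Suc n)" for n
    using d_pos[of n] by (simp add: V_def T_def)
  ultimately show "(\<lambda>n. (V (Suc n) - V n) / (T (Suc n) - T n)) \<longlonglongrightarrow> 0" by simp
qed

lemma q_eq: "q m = 1 - Q m" by (simp add: Q_def)

lemma q_nonneg: "0 \<le> q m" using Q_le1[of m] by (simp add: q_eq)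

lemma T_pos: "0 < j \<Longrightarrow> 0 < T j"
  unfolding T_def using d_pos by (intro sum_pos) auto

lemma final_lim:
  fixes t :: "nat \<Rightarrow> nat \<Rightarrow> real"
  assumes lo: "\<And>j m. 1 \<le> m \<Longrightarrow> m \<le> j \<Longrightarrow> q m * d (j - 1) / d (m - 1) \<le> t j m"
      and hi: "\<And>j m. 1 \<le> m \<Longrightarrow> m \<le> j \<Longrightarrow> t j m \<le> d j / d m"
  shows "(\<lambda>j. (\<Sum>m\<in>{1..j}. t j m) / real j) \<longlonglongrightarrow> \<alpha> / (2 * \<alpha> + 1)"
proof (rule tendsto_sandwich)
  define W where "W j = T j / (real j / d j)" for j
  have Wlim: "W \<longlonglongrightarrow> \<alpha> / (2 * \<alpha> + 1)" using W_lim by (simp add: W_def[abs_def])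
  show "(\<lambda>j. W j * (1 - V j / T j)) \<longlonglongrightarrow> \<alpha> / (2 * \<alpha> + 1)"
    using tendsto_mult[OF Wlim tendsto_diff[OF tendsto_const VT_lim, of 1]] by simp
  show "(\<lambda>j. W j + 1 / real j) \<longlonglongrightarrow> \<alpha> / (2 * \<alpha> + 1)"
    using tendsto_add[OF Wlim lim_inverse_n'] by simp
  show "eventually (\<lambda>j. (\<Sum>m\<in>{1..j}. t j m) / real j \<le> W j + 1 / real j) sequentially"
  proof (rule eventually_sequentiallyI[of 1])
    fix j :: nat assume j: "1 \<le> j"
    have "(\<Sum>m\<in>{1..j}. t j m) \<le> (\<Sum>m\<in>{1..j}. d j * (1 / d m))"
      using hi by (intro sum_mono) auto
    also have "\<dots> = d j * (\<Sum>m\<in>{1..j}. 1 / d m)" by (simp add: sum_distrib_left)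
    also have "(\<Sum>m\<in>{1..j}. 1 / d m) \<le> (\<Sum>m<Suc j. 1 / d m)"
      by (rule sum_mono2) (use d_pos less_imp_le in \<open>auto simp: less_Suc_eq_le\<close>)
    also have "\<dots> = T j + 1 / d j" by (simp add: T_def)
    finally have "(\<Sum>m\<in>{1..j}. t j m) \<le> d j * (T j + 1 / d j)"
      using d_pos[of j] by (simp add: mult_left_mono)
    also have "\<dots> = d j * T j + 1" using d_pos[of j] by (simp add: field_simps)
    finally have "(\<Sum>m\<in>{1..j}. t j m) / real j \<le> (d j * T j + 1) / real j"
      using j by (simp add: divide_right_mono)
    also have "\<dots> = W j + 1 / real j" using j d_pos[of j] by (simp add: W_def field_simps)
    finally show "(\<Sum>m\<in>{1..j}. t j m) / real j \<le> W j + 1 / real j" .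
  qed
  show "eventually (\<lambda>j. W j * (1 - V j / T j) \<le> (\<Sum>m\<in>{1..j}. t j m) / real j) sequentially"
  proof (rule eventually_sequentiallyI[of 1])
    fix j :: nat assume j: "1 \<le> j"
    have "W j * (1 - V j / T j) = d j * (T j - V j) / real j"
      using j d_pos[of j] T_pos[of j] by (simp add: W_def field_simps)
    also have "d j * (T j - V j) = (\<Sum>m<j. d j * (q (Suc m) / d m))"
      by (simp add: T_def V_def q_eq sum_distrib_left flip: sum_subtractf) (simp add: diff_divide_distrib right_diff_distrib)
    also have "\<dots> = (\<Sum>m\<in>{1..j}. q m * d j / d (m - 1))"
      unfolding One_nat_def sum.atLeast1_atMost_eq by (simp add: field_simps)
    also have "\<dots> \<le> (\<Sum>m\<in>{1..j}. t j m)"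
    proof (rule sum_mono)
      fix m assume m: "m \<in> {1..j}"
      have "q m * d j / d (m - 1) \<le> q m * d (j - 1) / d (m - 1)"
        using d_antimono[of "j - 1" j] d_pos[of "m - 1"] q_nonneg[of m]
        by (intro divide_right_mono mult_left_mono) auto
      also have "\<dots> \<le> t j m" using lo m by auto
      finally show "q m * d j / d (m - 1) \<le> t j m" .
    qed
    finally show "W j * (1 - V j / T j) \<le> (\<Sum>m\<in>{1..j}. t j m) / real j"
      using j by (simp add: divide_right_mono)
  qed
qed

lemma d_eq: "d n = q (Suc n) - q n"
  by (simp add: d_def Q_def q_def f_eq)

lemma q_lt1: "q n < 1"
  using Q_pos[of n] by (simp add: q_eq)

lemma q_less_Suc: "q n < q (Suc n)"
  using d_pos[of n] d_eq[of n] by simp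

end

lemma pgf0: "pgf p 0 = pmf p 0"
  unfolding pgf_def by (rule powser_zero)

lemma pgf_f0_lt1:
  assumes alpha: "0 < \<alpha>" and L: "slowly_varying_at_0 L"
    and gf: "\<forall>s\<in>{0..1::real}. (\<Sum>k. pmf p k * s ^ k) = s + (1 - s) powr (1 + \<alpha>) * L (1 - s)"
  shows "pgf p 0 < 1"
proof (rule ccontr)
  assume "\<not> pgf p 0 < 1"
  then have p0: "pmf p 0 = 1" using pmf_le_1[of p 0] by (simp add: pgf0)
  have pk: "pmf p k = 0" if "k > 0" for k
  proof -
    have "sum (pmf p) {0, k} \<le> (\<Sum>k. pmf p k)"
      by (rule sum_le_suminf) (use sums_summable[OF pmf_sums1[of p]] in auto)
    moreover have "sum (pmf p) {0, k} = pmf p 0 + pmf p k" using that by simp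
    moreover have "(\<Sum>k. pmf p k) = 1" using pmf_sums1[of p] sums_unique by metis
    ultimately have "pmf p 0 + pmf p k \<le> 1" by simp
    then show ?thesis using p0 pmf_nonneg[of p k] by linarith
  qed
  have one: "(\<Sum>k. pmf p k * s ^ k) = 1" for s :: real
  proof -
    have "(\<lambda>k. pmf p k * s ^ k) = (\<lambda>k. if k = 0 then 1 else 0)"
      using pk p0 by (auto intro!: ext)
    then show ?thesis using sums_single[of 0 "\<lambda>_. 1::real"] sums_unique by (metis (no_types, lifting))
  qed
  have Ly: "L y = 1 / y powr \<alpha>" if "0 < y" "y \<le> 1" for y :: real
  proof -
    have "1 = (1 - y) + y powr (1 + \<alpha>) * L y"
      using gf[rule_format, of "1 - y"] that one[of "1 - y"] by simp
    then have "y * (y powr \<alpha> * L y) = y" using that by (simp add: powr_add algebra_simps)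
    then have "y powr \<alpha> * L y = 1" using that by simp
    then show ?thesis using that by (simp add: field_simps)
  qed
  have lim1: "((\<lambda>x. L (2 * x) / L x) \<longlongrightarrow> 1) (at_right 0)"
    using L by (simp add: slowly_varying_at_0_def)
  have ev: "eventually (\<lambda>x. 1 / 2 powr \<alpha> = L (2 * x) / L x) (at_right (0::real))"
    unfolding eventually_at_right_field
  proof (intro exI[of _ "1/2"] conjI allI impI)
    fix x :: real assume x: "0 < x" "x < 1/2"
    have "L (2 * x) / L x = (1 / (2 * x) powr \<alpha>) / (1 / x powr \<alpha>)" using Ly[of x] Ly[of "2 * x"] x by simp
    also have "\<dots> = 1 / 2 powr \<alpha>" using x by (simp add: powr_mult field_simps)
    finally show "1 / 2 powr \<alpha> = L (2 * x) / L x" by simp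
  qed simp
  have "((\<lambda>x. L (2 * x) / L x) \<longlongrightarrow> 1 / 2 powr \<alpha>) (at_right 0)"
    by (rule Lim_transform_eventually[OF tendsto_const ev])
  then have "1 / 2 powr \<alpha> = (1::real)" using lim1 tendsto_unique[of "at_right (0::real)"] by force
  moreover have "(2::real) powr 0 < 2 powr \<alpha>" using alpha by (intro powr_less_mono) auto
  ultimately show False by simp
qed

lemma pgf_conv:
  assumes "0 \<le> a" "a < b" "b < c" "c \<le> 1"
  shows "(pgf p b - pgf p a) / (b - a) \<le> (pgf p c - pgf p b) / (c - b)"
proof -
  have w: "\<And>k. 0 \<le> pmf p k" "summable (pmf p)" using sums_summable[OF pmf_sums1[of p]] by auto
  define G where "G = (\<Sum>k. real (Suc k) * pmf p (Suc k) * b ^ k)"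
  have 1: "pgf p b - pgf p a \<le> G * (b - a)"
    unfolding pgf_def G_def by (rule series_slope(2)[OF w]) (use assms in auto)
  have 2: "G * (c - b) \<le> pgf p c - pgf p b"
    unfolding pgf_def G_def by (rule series_slope(1)[OF w]) (use assms in auto)
  have "(pgf p b - pgf p a) / (b - a) \<le> G" using 1 assms by (simp add: divide_le_eq)
  also have "G \<le> (pgf p c - pgf p b) / (c - b)" using 2 assms by (simp add: le_divide_eq)
  finally show ?thesis .
qed

lemma ennreal_sums:
  fixes a :: "nat \<Rightarrow> real"
  assumes "\<And>k. 0 \<le> a k" "(\<Sum>k. ennreal (a k)) = ennreal c" "0 \<le> c"
  shows "a sums c"
proof -
  have sm: "summable a" by (rule summable_suminf_not_top) (use assms in auto)
  have "ennreal (suminf a) = ennreal c" using suminf_ennreal2[OF assms(1) sm] assms(2) by simp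
  then have "suminf a = c" using assms(3) suminf_nonneg[OF sm assms(1)] by simp
  then show ?thesis using summable_sums[OF sm] by simp
qed

lemma wdist_sums:
  assumes GW: "GW_process M p xi Z" and s: "0 \<le> s" "s \<le> 1"
  shows "(\<lambda>k. wdist M Z l k * s ^ k) sums ((pgf p ^^ l) s)"
proof -
  interpret prob_space M using GW by (simp add: GW_process_def)
  have "(\<integral>\<^sup>+\<omega>. ennreal (1 * s ^ Z (0 + l) \<omega>) \<partial>M) = (\<integral>\<^sup>+\<omega>. ennreal (1 * ((pgf p ^^ l) s) ^ Z 0 \<omega>) \<partial>M)"
    by (rule iterate_step[OF GW _ s]) simp
  also have "\<dots> = (\<integral>\<^sup>+\<omega>. ennreal ((pgf p ^^ l) s) \<partial>M)"
    by (rule nn_integral_cong) (use GW in \<open>simp add: GW_process_def\<close>)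
  also have "\<dots> = ennreal ((pgf p ^^ l) s)" by (simp add: emeasure_space_1)
  finally have e1: "(\<integral>\<^sup>+\<omega>. ennreal (s ^ Z l \<omega>) \<partial>M) = ennreal ((pgf p ^^ l) s)" by simp
  have e2: "(\<integral>\<^sup>+\<omega>. ennreal (s ^ Z l \<omega>) \<partial>M) = (\<Sum>k. ennreal (s ^ k * wdist M Z l k))"
    by (rule nn_integral_Z[OF GW]) (use s in simp)
  show ?thesis
    by (rule ennreal_sums) (use e1 e2 s funpow_pgf_range[OF s, where p=p and m=l] in \<open>auto simp: wdist_def mult.commute\<close>)
qed

lemma wdist_nonneg: "0 \<le> wdist M Z l k"
  by (simp add: wdist_def)

theorem lemma18:
  fixes M :: "'a measure" and p :: "nat pmf" and xi :: "nat \<Rightarrow> nat \<Rightarrow> 'a \<Rightarrow> nat"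
    and Z :: "nat \<Rightarrow> 'a \<Rightarrow> nat" and \<alpha> :: real and L :: "real \<Rightarrow> real"
  assumes GW: "GW_process M p xi Z"
    and mean: "integrable (measure_pmf p) real" "measure_pmf.expectation p real = 1"
    and alpha: "0 < \<alpha>" "\<alpha> \<le> 1"
    and L: "slowly_varying_at_0 L"
    and gf: "\<forall>s\<in>{0..1::real}. (\<Sum>k. pmf p k * s ^ k) = s + (1 - s) powr (1 + \<alpha>) * L (1 - s)"
  shows "(\<lambda>j. prob_space.expectation M
              (\<lambda>\<omega>. real (\<Sum>l<j. Z l \<omega>) * indicator {\<omega>\<in>space M. Z j \<omega> = 0} \<omega>))
         \<sim>[at_top] (\<lambda>j. \<alpha> * real j / (2 * \<alpha> + 1))"
proof -
  interpret prob_space M using GW by (simp add: GW_process_def)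
  interpret C: crit "pgf p" \<alpha> L
  proof
    show "0 < \<alpha>" by (rule alpha(1))
    show "\<And>s. 0 \<le> s \<Longrightarrow> s \<le> 1 \<Longrightarrow> pgf p s = s + (1 - s) powr (1 + \<alpha>) * L (1 - s)"
      using gf by (simp add: pgf_def)
    show "slowly_varying_at_0 L" by (rule L)
    show "\<And>a b c. 0 \<le> a \<Longrightarrow> a < b \<Longrightarrow> b < c \<Longrightarrow> c \<le> 1 \<Longrightarrow>
        (pgf p b - pgf p a) / (b - a) \<le> (pgf p c - pgf p b) / (c - b)"
      by (rule pgf_conv)
    show "pgf p 0 < 1" by (rule pgf_f0_lt1[OF alpha(1) L gf])
  qed
  note Zm[measurable] = Z_meas[OF GW]
  define w where "w l k = wdist M Z l k" for l k
  define G where "G l x = (\<Sum>k. real (Suc k) * w l (Suc k) * x ^ k)" for l x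
  define t where "t j m = C.q m * G (j - m) (C.q m)" for j m
  have wnn: "0 \<le> w l k" for l k by (simp add: w_def wdist_nonneg)
  have wsum: "(\<lambda>k. w l k * s ^ k) sums ((pgf p ^^ l) s)" if "0 \<le> s" "s \<le> 1" for l s
    unfolding w_def by (rule wdist_sums[OF GW that])
  have wsumm: "summable (w l)" for l
    using sums_summable[OF wsum[of 1 l]] by simp
  have Fq: "(\<Sum>k. w l k * C.q m ^ k) = C.q (l + m)" for l m
  proof -
    have "(\<Sum>k. w l k * C.q m ^ k) = (pgf p ^^ l) (C.q m)"
      using wsum[of "C.q m" l] C.q_nonneg[of m] C.q_lt1[of m] sums_unique by fastforce
    also have "\<dots> = C.q (l + m)" by (simp add: C.q_def funpow_add)
    finally show ?thesis .
  qed
  have Gnn: "0 \<le> G l x" if "0 \<le> x" "x < 1" for l x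
    unfolding G_def by (intro suminf_nonneg series_deriv_summable wsumm) (use wnn that in auto)
  have tnn: "0 \<le> t j m" for j m
    unfolding t_def using C.q_nonneg C.q_lt1 Gnn by simp
  have bounds: "C.q m * C.d (j - 1) / C.d (m - 1) \<le> t j m \<and> t j m \<le> C.d j / C.d m"
    if m: "1 \<le> m" "m \<le> j" for j m
  proof -
    define l where "l = j - m"
    have lm: "l + m = j" "l + (m - 1) = j - 1" "l + Suc m = Suc j" using m by (auto simp: l_def)
    have msuc: "Suc (m - 1) = m" using m by simp
    have jsuc: "Suc (j - 1) = j" using m by simp
    have x1: "C.q m < 1" by (rule C.q_lt1)
    have y0: "0 \<le> C.q (m - 1)" by (rule C.q_nonneg)
    have ylx: "C.q (m - 1) < C.q m" using C.q_less_Suc[of "m - 1"] msuc by simp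
    have "(\<Sum>k. w l k * C.q m ^ k) - (\<Sum>k. w l k * C.q (m - 1) ^ k) \<le> G l (C.q m) * (C.q m - C.q (m - 1))"
      unfolding G_def by (rule series_slope(2)[OF wnn wsumm y0 ylx]) (use x1 in auto)
    then have "C.d (j - 1) \<le> G l (C.q m) * C.d (m - 1)"
      unfolding Fq lm using C.d_eq[of "m - 1"] C.d_eq[of "j - 1"] msuc jsuc by simp
    then have "C.d (j - 1) / C.d (m - 1) \<le> G l (C.q m)"
      using C.d_pos[of "m - 1"] by (simp add: divide_le_eq)
    then have lo: "C.q m * C.d (j - 1) / C.d (m - 1) \<le> t j m"
      unfolding t_def l_def[symmetric] using C.q_nonneg[of m] by (simp add: mult_left_mono times_divide_eq_right[symmetric] del: times_divide_eq_right)
    have y0': "0 \<le> C.q m" by (rule C.q_nonneg)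
    have "G l (C.q m) * (C.q (Suc m) - C.q m) \<le> (\<Sum>k. w l k * C.q (Suc m) ^ k) - (\<Sum>k. w l k * C.q m ^ k)"
      unfolding G_def by (rule series_slope(1)[OF wnn wsumm y0' C.q_less_Suc]) (use x1 C.q_lt1[of "Suc m"] in auto)
    then have "G l (C.q m) * C.d m \<le> C.d j"
      unfolding Fq lm using C.d_eq[of m] C.d_eq[of j] by simp
    then have G_le: "G l (C.q m) \<le> C.d j / C.d m"
      using C.d_pos[of m] by (simp add: le_divide_eq)
    have "t j m \<le> G l (C.q m)"
      unfolding t_def l_def[symmetric] using C.q_lt1[of m] Gnn[OF y0' x1, of l] y0'
      by (intro mult_left_le_one_le) auto
    with G_le lo show ?thesis by simp
  qed
  have tsums: "(\<lambda>k. real k * C.q m ^ k * w l k) sums (C.q m * G l (C.q m))" for l m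
  proof -
    have y0': "0 \<le> C.q m" "C.q m < 1" by (rule C.q_nonneg, rule C.q_lt1)
    have "(\<lambda>k. real (Suc k) * w l (Suc k) * C.q m ^ k) sums G l (C.q m)"
      unfolding G_def by (rule summable_sums, rule series_deriv_summable[OF wnn wsumm y0'])
    then have "(\<lambda>k. C.q m * (real (Suc k) * w l (Suc k) * C.q m ^ k)) sums (C.q m * G l (C.q m))"
      by (rule sums_mult)
    then have "(\<lambda>k. real (Suc k) * C.q m ^ Suc k * w l (Suc k)) sums (C.q m * G l (C.q m))"
      by (simp add: mult_ac)
    then show ?thesis using sums_Suc_iff[where f="\<lambda>k. real k * C.q m ^ k * w l k"] by simp
  qed
  have E: "(\<integral>\<^sup>+\<omega>. ennreal (real (Z l \<omega>) * indicator {\<omega>\<in>space M. Z j \<omega> = 0} \<omega>) \<partial>M) = ennreal (t j (j - l))"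
    if l: "l < j" for l j
  proof -
    have "(\<integral>\<^sup>+\<omega>. ennreal (real (Z l \<omega>) * indicator {\<omega>\<in>space M. Z j \<omega> = 0} \<omega>) \<partial>M)
        = (\<integral>\<^sup>+\<omega>. ennreal (real (Z l \<omega>) * 0 ^ Z (l + (j - l)) \<omega>) \<partial>M)"
      by (rule nn_integral_cong) (use l in \<open>auto simp: indicator_def\<close>)
    also have "\<dots> = (\<integral>\<^sup>+\<omega>. ennreal (real (Z l \<omega>) * ((pgf p ^^ (j - l)) 0) ^ Z l \<omega>) \<partial>M)"
      by (rule iterate_step[OF GW]) auto
    also have "\<dots> = (\<Sum>k. ennreal (real k * C.q (j - l) ^ k * w l k))"
      unfolding w_def C.q_def by (rule nn_integral_Z[OF GW]) (use funpow_pgf_range[of 0 _ p] in auto)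
    also have "\<dots> = ennreal (t j (j - l))"
    proof -
      have sm: "summable (\<lambda>k. real k * C.q (j - l) ^ k * w l k)" using tsums sums_summable by blast
      have "(\<Sum>k. ennreal (real k * C.q (j - l) ^ k * w l k)) = ennreal (\<Sum>k. real k * C.q (j - l) ^ k * w l k)"
        by (rule suminf_ennreal2[OF _ sm]) (use C.q_nonneg wnn in auto)
      also have "(\<Sum>k. real k * C.q (j - l) ^ k * w l k) = t j (j - l)"
        using tsums[of "j - l" l] sums_unique unfolding t_def by (metis diff_diff_cancel less_imp_le l)
      finally show ?thesis .
    qed
    finally show ?thesis .
  qed
  have A: "prob_space.expectation M (\<lambda>\<omega>. real (\<Sum>l<j. Z l \<omega>) * indicator {\<omega>\<in>space M. Z j \<omega> = 0} \<omega>)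
        = (\<Sum>m\<in>{1..j}. t j m)" for j
  proof -
    have "expectation (\<lambda>\<omega>. real (\<Sum>l<j. Z l \<omega>) * indicator {\<omega>\<in>space M. Z j \<omega> = 0} \<omega>)
       = enn2real (\<integral>\<^sup>+\<omega>. ennreal (real (\<Sum>l<j. Z l \<omega>) * indicator {\<omega>\<in>space M. Z j \<omega> = 0} \<omega>) \<partial>M)"
      by (rule integral_eq_nn_integral) (auto intro!: AE_I2 mult_nonneg_nonneg sum_nonneg)
    also have "(\<integral>\<^sup>+\<omega>. ennreal (real (\<Sum>l<j. Z l \<omega>) * indicator {\<omega>\<in>space M. Z j \<omega> = 0} \<omega>) \<partial>M)
        = (\<integral>\<^sup>+\<omega>. (\<Sum>l<j. ennreal (real (Z l \<omega>) * indicator {\<omega>\<in>space M. Z j \<omega> = 0} \<omega>)) \<partial>M)"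
      by (rule nn_integral_cong) (simp add: sum_distrib_right)
    also have "\<dots> = (\<Sum>l<j. \<integral>\<^sup>+\<omega>. ennreal (real (Z l \<omega>) * indicator {\<omega>\<in>space M. Z j \<omega> = 0} \<omega>) \<partial>M)"
      by (rule nn_integral_sum) measurable
    also have "\<dots> = (\<Sum>l<j. ennreal (t j (j - l)))"
      by (rule sum.cong) (auto simp: E)
    also have "\<dots> = ennreal (\<Sum>l<j. t j (j - l))" by (simp add: tnn)
    finally have "expectation (\<lambda>\<omega>. real (\<Sum>l<j. Z l \<omega>) * indicator {\<omega>\<in>space M. Z j \<omega> = 0} \<omega>) = (\<Sum>l<j. t j (j - l))"
      by (simp add: sum_nonneg tnn)
    also have "(\<Sum>l<j. t j (j - l)) = (\<Sum>m\<in>{1..j}. t j m)"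
      by (rule sum.reindex_bij_witness[where i="\<lambda>m. j - m" and j="\<lambda>l. j - l"]) auto
    finally show ?thesis .
  qed
  have lim: "(\<lambda>j. (\<Sum>m\<in>{1..j}. t j m) / real j) \<longlonglongrightarrow> \<alpha> / (2 * \<alpha> + 1)"
    by (rule C.final_lim) (use bounds in auto)
  have K: "0 < \<alpha> / (2 * \<alpha> + 1)" using alpha by simp
  have "(\<lambda>j. ((\<Sum>m\<in>{1..j}. t j m) / real j) / (\<alpha> / (2 * \<alpha> + 1))) \<longlonglongrightarrow> (\<alpha> / (2 * \<alpha> + 1)) / (\<alpha> / (2 * \<alpha> + 1))"
    by (rule tendsto_divide[OF lim tendsto_const]) (use K alpha in simp)
  moreover have "(\<alpha> / (2 * \<alpha> + 1)) / (\<alpha> / (2 * \<alpha> + 1)) = 1" using K alpha by simp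
  ultimately have lim2: "(\<lambda>j. ((\<Sum>m\<in>{1..j}. t j m) / real j) / (\<alpha> / (2 * \<alpha> + 1))) \<longlonglongrightarrow> 1"
    by metis
  have ev: "eventually (\<lambda>j. ((\<Sum>m\<in>{1..j}. t j m) / real j) / (\<alpha> / (2 * \<alpha> + 1))
      = prob_space.expectation M (\<lambda>\<omega>. real (\<Sum>l<j. Z l \<omega>) * indicator {\<omega>\<in>space M. Z j \<omega> = 0} \<omega>) / (\<alpha> * real j / (2 * \<alpha> + 1))) sequentially"
  proof (rule eventually_sequentiallyI[of 1])
    fix j :: nat assume "1 \<le> j"
    then show "((\<Sum>m\<in>{1..j}. t j m) / real j) / (\<alpha> / (2 * \<alpha> + 1))
      = prob_space.expectation M (\<lambda>\<omega>. real (\<Sum>l<j. Z l \<omega>) * indicator {\<omega>\<in>space M. Z j \<omega> = 0} \<omega>) / (\<alpha> * real j / (2 * \<alpha> + 1))"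
      unfolding A using alpha by (simp add: field_simps)
  qed
  show ?thesis
    by (rule asymp_equivI') (use Lim_transform_eventually[OF lim2 ev] in simp)
qed

end
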